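(* Let $K$ and $K'$ be two CMIs on $X_1,\dots,X_n$. Then $K$ implies $K'$ (i.e., for every joint distribution of $X_1,\dots,X_n$, if $K$ is valid then $K'$ is valid) if and only if $K'$ is a sub-CMI of $K$.
   Context: Setting: $X_1,\dots,X_n$ are jointly distributed discrete random variables with $H(X_i)<\infty$; distribution otherwise unspecified. $\mathcal N_n=\{1,\dots,n\}$, $X_\alpha=(X_i,i\in\alpha)$, $X_\emptyset$ constant. A CMI is $K=(C,\langle Q_1,\dots,Q_k\rangle)$, $k\ge0$, $C\subseteq\mathcal N_n$, $\langle\cdot\rangle$ an unordered multiset of subsets of $\mathcal N_n$; it is valid (for a given distribution) if $\sum_i H(X_{Q_i}|X_C)-H(X_{Q_1},\dots,X_{Q_k}|X_C)=0$. Empty members may be deleted; equality of CMIs means equal conditioning sets and equal multisets. Degenerate CMIs (valid for every distribution) are identified and written $(\cdot,\langle\ \rangle)$. $\mathrm{pur}(K)=(C,\langle Q_i\setminus C:Q_i\setminus C\ne\emptyset\rangle)$. For pure $K$: $\mathbb I_K$ = set of indices lying in at least two members of the collection if $k\ge2$ (else $\emptyset$); $P_1,\dots,P_t$ the nonempty sets among $Q_i\setminus\mathbb I_K$; $\mathrm{can}(K)=(\cdot,\langle\ \rangle)$ if $k\le1$, $(C,\langle\mathbb I_K,\mathbb I_K\rangle)$ if $k\ge2,\mathbb I_K\ne\emptyset,t\le1$, $(C,\langle P_1..P_t\rangle)$ if $k\ge2,\mathbb I_K=\emptyset$, $(C,\langle\mathbb I_K,\mathbb I_K,P_1..P_t\rangle)$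 if $k\ge2,\mathbb I_K\ne\emptyset,t\ge2$. For a general CMI $K$, $\mathbb I_K$ denotes the repeated-index set of $\mathrm{pur}(K)$, and $\mathrm{can}(\mathrm{pur}(K))$ is written in general form $(C,\langle\mathbb I_K,\mathbb I_K,P_i,1\le i\le t\rangle)$ (the two copies of $\mathbb I_K$ omitted if $\mathbb I_K=\emptyset$; when $K$ is degenerate, $\mathbb I_K=\emptyset$, $t\in\{0,1\}$). Write $P=\bigcup_iP_i$, $S=C\cup P$. $K'$ conditioning on $K$: with $\mathrm{can}(\mathrm{pur}(K'))=(C',\langle\mathbb I_{K'},\mathbb I_{K'},P'_j,1\le j\le s\rangle)$, let $D=\mathbb I_{K'}\setminus\mathbb I_K$ and $T_1,\dots,T_u$ the nonempty sets among $P'_j\setminus\mathbb I_K$. $R_K^{K'}=(\cdot,\langle\ \rangle)$ if $D=\emptyset,u\le1$; $(C'\setminus\mathbb I_K,\langle T_1..T_u\rangle)$ if $D=\emptyset,u\ge2$; $(C'\setminus\mathbb I_K,\langle D,D\rangle)$ if $D\ne\emptyset,u\le1$; $(C'\setminus\mathbb I_K,\langle D,D,T_1..T_u\rangle)$ if $D\ne\emptyset,u\ge2$. Sub-CMI: let $K''=R_K^{K'}$, $\mathrm{can}(\mathrm{pur}(K''))=(C'',\langle\mathbb I_{K''},\mathbb I_{K''},P''_j,1\le j\le r\rangle)$, $P''=\bigcup_jP''_j$. $K'$ is a sub-CMI of $K$ if one of: (i) $K'=(\cdot,\langle\ \rangle)$; (ii) $\mathrm{can}(\mathrm{pur}(K''))=(\cdot,\langle\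 \rangle)$ and $C\subseteq C'$; (iii) $\mathrm{can}(\mathrm{pur}(K''))\ne(\cdot,\langle\ \rangle)$, $\mathbb I_{K''}=\emptyset$, $P''\subseteq P$, $C\subseteq C''\subseteq S\setminus P''$, and whenever $m_1\in P''_{j_1}$, $m_2\in P''_{j_2}$ with $j_1\ne j_2$, then $m_1\in P_{i_1}$, $m_2\in P_{i_2}$ with $i_1\ne i_2$. *)

theory Defs
  imports "HOL-Probability.Probability" "HOL-Library.Multiset"
begin

text \<open>A joint distribution of the discrete random variables X_1,...,X_n is modelled as a
pmf on outcomes \<omega> :: nat \<Rightarrow> nat, where X_i = \<omega> i (countable alphabets are
encoded in nat).  Only the coordinates 1..n are used.\<close>

definition ent :: "'a pmf \<Rightarrow> real" where
  "ent p = (\<Sum>\<^sub>\<infinity>x. - pmf p x * ln (pmf p x))"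

definition finite_ent :: "'a pmf \<Rightarrow> bool" where
  "finite_ent p \<longleftrightarrow> (\<lambda>x. - pmf p x * ln (pmf p x)) summable_on UNIV"

definition admissible :: "nat \<Rightarrow> (nat \<Rightarrow> nat) pmf \<Rightarrow> bool" where
  "admissible n P \<longleftrightarrow> (\<forall>i\<in>{1..n}. finite_ent (map_pmf (\<lambda>\<omega>. \<omega> i) P))"

definition rv :: "nat set \<Rightarrow> (nat \<Rightarrow> nat) \<Rightarrow> (nat \<Rightarrow> nat)" where
  "rv \<alpha> \<omega> = (\<lambda>i. if i \<in> \<alpha> then \<omega> i else 0)"

definition jointrv :: "nat set multiset \<Rightarrow> (nat \<Rightarrow> nat) \<Rightarrow> (nat set \<Rightarrow> nat \<Rightarrow> nat)" where
  "jointrv Qs \<omega> = (\<lambda>A. if A \<in># Qs then rv A \<omega> else (\<lambda>_. 0))"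

definition condent :: "'o pmf \<Rightarrow> ('o \<Rightarrow> 'a) \<Rightarrow> ('o \<Rightarrow> 'b) \<Rightarrow> real" where
  "condent P f g = ent (map_pmf (\<lambda>\<omega>. (f \<omega>, g \<omega>)) P) - ent (map_pmf g P)"

text \<open>A CMI (C, <Q_1,...,Q_k>): conditioning set and multiset of index sets.\<close>
type_synonym cmi = "nat set \<times> nat set multiset"

definition cmi_on :: "nat \<Rightarrow> cmi \<Rightarrow> bool" where
  "cmi_on n K \<longleftrightarrow> fst K \<subseteq> {1..n} \<and> (\<forall>Q\<in>#snd K. Q \<subseteq> {1..n})"

definition valid :: "(nat \<Rightarrow> nat) pmf \<Rightarrow> cmi \<Rightarrow> bool" where
  "valid P K \<longleftrightarrow>
     sum_mset (image_mset (\<lambda>Q. condent P (rv Q) (rv (fst K))) (snd K))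
       - condent P (jointrv (snd K)) (rv (fst K)) = 0"

definition cmi_implies :: "nat \<Rightarrow> cmi \<Rightarrow> cmi \<Rightarrow> bool" where
  "cmi_implies n K K' \<longleftrightarrow> (\<forall>P. admissible n P \<longrightarrow> valid P K \<longrightarrow> valid P K')"

text \<open>Degenerate: valid for every distribution; these are identified with (.,< >).\<close>
definition degenerate :: "nat \<Rightarrow> cmi \<Rightarrow> bool" where
  "degenerate n K \<longleftrightarrow> (\<forall>P. admissible n P \<longrightarrow> valid P K)"

definition pur :: "cmi \<Rightarrow> cmi" where
  "pur K = (fst K, filter_mset (\<lambda>Q. Q \<noteq> {}) (image_mset (\<lambda>Q. Q - fst K) (snd K)))"

definition repI :: "nat set multiset \<Rightarrow> nat set" where
  "repI Qs = (if 2 \<le> size Qs then {i. 2 \<le> size (filter_mset (\<lambda>Q. i \<in> Q) Qs)} else {})"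

definition Pparts :: "nat set \<Rightarrow> nat set multiset \<Rightarrow> nat set multiset" where
  "Pparts I Qs = filter_mset (\<lambda>A. A \<noteq> {}) (image_mset (\<lambda>Q. Q - I) Qs)"

text \<open>Canonical form of a pure CMI; None stands for (.,< >).\<close>
definition can :: "cmi \<Rightarrow> cmi option" where
  "can K = (let C = fst K; Qs = snd K; I = repI Qs; Ps = Pparts I Qs in
     if size Qs \<le> 1 then None
     else if I = {} then Some (C, Ps)
     else if size Ps \<le> 1 then Some (C, {#I, I#})
     else Some (C, {#I, I#} + Ps))"

definition canpur :: "cmi option \<Rightarrow> cmi option" where
  "canpur K = (case K of None \<Rightarrow> None | Some K0 \<Rightarrow> can (pur K0))"

text \<open>General-form components of can(pur(K)) = (C, <I_K, I_K, P_i>):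
  I_K is the repeated-index set of pur(K), and the P_i are the nonempty sets among the
  members of pur(K) minus I_K (this also covers the degenerate convention).\<close>
definition cmiI :: "cmi \<Rightarrow> nat set" where
  "cmiI K = repI (snd (pur K))"

definition cmiP :: "cmi \<Rightarrow> nat set multiset" where
  "cmiP K = Pparts (cmiI K) (snd (pur K))"

text \<open>R_K^{K'} (K' conditioning on K); None stands for (.,< >).\<close>
definition Rcond :: "cmi \<Rightarrow> cmi \<Rightarrow> cmi option" where
  "Rcond K K' = (let D = cmiI K' - cmiI K; T = Pparts (cmiI K) (cmiP K');
                     C2 = fst K' - cmiI K in
     if D = {} then (if size T \<le> 1 then None else Some (C2, T))
     else if size T \<le> 1 then Some (C2, {#D, D#})
     else Some (C2, {#D, D#} + T))"

definition sub_cmi :: "nat \<Rightarrow> cmi \<Rightarrow> cmi \<Rightarrow> bool" where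
  "sub_cmi n K' K \<longleftrightarrow>
     degenerate n K'
   \<or> (canpur (Rcond K K') = None \<and> fst K \<subseteq> fst K')
   \<or> (\<exists>K3. Rcond K K' = Some K3 \<and> canpur (Some K3) \<noteq> None \<and> cmiI K3 = {}
        \<and> \<Union>(set_mset (cmiP K3)) \<subseteq> \<Union>(set_mset (cmiP K))
        \<and> fst K \<subseteq> fst K3
        \<and> fst K3 \<subseteq> (fst K \<union> \<Union>(set_mset (cmiP K))) - \<Union>(set_mset (cmiP K3))
        \<and> (\<forall>A B m1 m2. A \<in># cmiP K3 \<and> B \<in># cmiP K3 - {#A#} \<and> m1 \<in> A \<and> m2 \<in> B \<longrightarrow>
             (\<exists>X Y. X \<in># cmiP K \<and> Y \<in># cmiP K - {#X#} \<and> m1 \<in> X \<and> m2 \<in> Y)))"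

end

theory Submission
  imports Defs
begin


definition Hn :: "'a pmf \<Rightarrow> ('a \<Rightarrow> 'b) \<Rightarrow> ennreal" where
  "Hn p F = (\<integral>\<^sup>+\<omega>. ennreal (- ln (pmf (map_pmf F p) (F \<omega>))) \<partial>measure_pmf p)"

lemma Hn_alt:
  "Hn p F = (\<integral>\<^sup>+v. ennreal (- pmf (map_pmf F p) v * ln (pmf (map_pmf F p) v)) \<partial>count_space UNIV)"
proof -
  let ?q = "map_pmf F p"
  have "Hn p F = (\<integral>\<^sup>+v. ennreal (- ln (pmf ?q v)) \<partial>measure_pmf ?q)"
    unfolding Hn_def by simp
  also have "\<dots> = (\<integral>\<^sup>+v. ennreal (pmf ?q v) * ennreal (- ln (pmf ?q v)) \<partial>count_space UNIV)"
    by (rule nn_integral_measure_pmf)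
  also have "\<dots> = (\<integral>\<^sup>+v. ennreal (- pmf ?q v * ln (pmf ?q v)) \<partial>count_space UNIV)"
    by (intro nn_integral_cong) (simp add: ennreal_mult'[symmetric])
  finally show ?thesis .
qed

lemma ent_term_nonneg: "0 \<le> - pmf q v * ln (pmf q v)"
proof -
  have "pmf q v \<le> 1" by (rule pmf_le_1)
  then have "ln (pmf q v) \<le> 0" using pmf_nonneg[of q v]
    by (cases "pmf q v = 0") auto
  then show ?thesis using pmf_nonneg[of q v] by (simp add: mult_nonneg_nonpos)
qed

lemma ent_Hn_gen:
  fixes q :: "'b pmf"
  shows "(finite_ent q \<longleftrightarrow> Hn q id < \<infinity>) \<and> ent q = enn2real (Hn q id)"
proof -
  define g where "g v = - pmf q v * ln (pmf q v)" for v
  have g0: "\<And>v. 0 \<le> g v" unfolding g_def by (rule ent_term_nonneg)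
  have H: "Hn q id = (\<integral>\<^sup>+v. ennreal (g v) \<partial>count_space UNIV)"
    unfolding Hn_alt g_def by simp
  show ?thesis
  proof (cases "g summable_on UNIV")
    case True
    then have "Infinite_Sum.abs_summable_on g UNIV" using g0 by simp
    then have as: "Infinite_Set_Sum.abs_summable_on g UNIV"
      using abs_summable_equivalent by blast
    have "(\<integral>\<^sup>+v. ennreal (g v) \<partial>count_space UNIV) = ennreal (infsetsum g UNIV)"
      using nn_integral_conv_infsetsum[OF as] g0 by simp
    also have "infsetsum g UNIV = infsum g UNIV" using infsetsum_infsum[OF as] .
    finally have "Hn q id = ennreal (infsum g UNIV)" using H by simp
    moreover have "0 \<le> infsum g UNIV" using g0 by (simp add: infsum_nonneg)
    ultimately show ?thesis using True
      unfolding finite_ent_def ent_def g_def[symmetric] by simp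
  next
    case False
    have "Hn q id = \<infinity>"
    proof (rule ccontr)
      assume "Hn q id \<noteq> \<infinity>"
      then have "(\<integral>\<^sup>+v. ennreal (norm (g v)) \<partial>count_space UNIV) < \<infinity>"
        using H g0 by (simp add: top.not_eq_extremum)
      then have "integrable (count_space UNIV) g"
        by (subst integrable_iff_bounded) simp
      then have "Infinite_Set_Sum.abs_summable_on g UNIV"
        by (simp add: abs_summable_on_def)
      then have "Infinite_Sum.abs_summable_on g UNIV"
        using abs_summable_equivalent by blast
      then show False using False g0 by simp
    qed
    then show ?thesis using False
      unfolding finite_ent_def ent_def g_def[symmetric] by (simp add: infsum_not_exists)
  qed
qed

lemma Hn_map: "Hn (map_pmf F p) id = Hn p F"
  unfolding Hn_def by simp

lemma ent_Hn: "ent (map_pmf F p) = enn2real (Hn p F)"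
  using ent_Hn_gen[of "map_pmf F p"] by (simp add: Hn_map)

lemma finite_ent_Hn: "finite_ent (map_pmf F p) \<longleftrightarrow> Hn p F < \<infinity>"
  using ent_Hn_gen[of "map_pmf F p"] by (simp add: Hn_map)


lemma pmf_map_eq: "pmf (map_pmf F p) (F \<omega>) = measure p {\<omega>'. F \<omega>' = F \<omega>}"
  by (simp add: pmf_map vimage_def)

lemma pmf_map_pos: "\<omega> \<in> set_pmf p \<Longrightarrow> 0 < pmf (map_pmf F p) (F \<omega>)"
  by (simp add: pmf_positive)

lemma ln_surprisal_nonneg: "0 \<le> - ln (pmf q v)"
  using pmf_le_1[of q v] pmf_nonneg[of q v] by (cases "pmf q v = 0") auto

lemma Hn_cong:
  assumes "\<And>\<omega> \<omega>'. F \<omega> = F \<omega>' \<longleftrightarrow> G \<omega> = G \<omega>'"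
  shows "Hn p F = Hn p G"
proof -
  have "\<And>\<omega>. {\<omega>'. F \<omega>' = F \<omega>} = {\<omega>'. G \<omega>' = G \<omega>}"
    using assms by blast
  then show ?thesis unfolding Hn_def pmf_map_eq by simp
qed

lemma Hn_mono:
  assumes "\<And>\<omega> \<omega>'. G \<omega> = G \<omega>' \<Longrightarrow> F \<omega> = F \<omega>'"
  shows "Hn p F \<le> Hn p G"
  unfolding Hn_def
proof (intro nn_integral_mono_AE, unfold AE_measure_pmf_iff, intro ballI ennreal_leI)
  fix \<omega> assume w: "\<omega> \<in> set_pmf p"
  have pos: "0 < pmf (map_pmf G p) (G \<omega>)" using pmf_map_pos[OF w] .
  have "measure p {\<omega>'. G \<omega>' = G \<omega>} \<le> measure p {\<omega>'. F \<omega>' = F \<omega>}"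
  proof (rule measure_pmf.finite_measure_mono)
    show "{\<omega>'. G \<omega>' = G \<omega>} \<subseteq> {\<omega>'. F \<omega>' = F \<omega>}"
      using assms by blast
  qed simp
  then have le: "pmf (map_pmf G p) (G \<omega>) \<le> pmf (map_pmf F p) (F \<omega>)"
    by (simp add: pmf_map_eq)
  then show "- ln (pmf (map_pmf F p) (F \<omega>)) \<le> - ln (pmf (map_pmf G p) (G \<omega>))"
    using pos by simp
qed

lemma Hn_const:
  assumes "\<And>\<omega> \<omega>'. F \<omega> = F \<omega>'"
  shows "Hn p F = 0"
proof -
  have "\<And>\<omega>. {\<omega>'. F \<omega>' = F \<omega>} = UNIV"
    using assms by blast
  then have "\<And>\<omega>. measure p {\<omega>'. F \<omega>' = F \<omega>} = 1"
    by simp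
  then show ?thesis unfolding Hn_def pmf_map_eq by simp
qed

lemma measure_cond_pmf:
  assumes "set_pmf p \<inter> S \<noteq> {}"
  shows "measure (cond_pmf p S) A = measure p (S \<inter> A) / measure p S"
proof -
  have "emeasure (measure_pmf p) S \<noteq> 0"
    using assms by (simp add: emeasure_measure_pmf_not_zero)
  then show ?thesis
    by (simp add: cond_pmf.rep_eq[OF assms] measure_pmf.emeasure_eq_measure)
qed

lemma pmf_R:
  fixes p :: "'a pmf" and X :: "'a \<Rightarrow> 'x" and Y :: "'a \<Rightarrow> 'y" and Z :: "'a \<Rightarrow> 'z"
  defines "R \<equiv> bind_pmf p (\<lambda>\<omega>1. map_pmf (\<lambda>\<omega>2. (X \<omega>1, Y \<omega>2, Z \<omega>1)) (cond_pmf p {\<omega>. Z \<omega> = Z \<omega>1}))"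
  shows "pmf R (x, y, z) = measure p {\<omega>. X \<omega> = x \<and> Z \<omega> = z} *
           (measure p {\<omega>. Y \<omega> = y \<and> Z \<omega> = z} / measure p {\<omega>. Z \<omega> = z})"
proof -
  have "pmf R (x, y, z) = (\<integral>\<omega>1. pmf (map_pmf (\<lambda>\<omega>2. (X \<omega>1, Y \<omega>2, Z \<omega>1)) (cond_pmf p {\<omega>. Z \<omega> = Z \<omega>1})) (x, y, z) \<partial>p)"
    unfolding R_def by (rule pmf_bind)
  also have "\<dots> = (\<integral>\<omega>1. indicator {\<omega>. X \<omega> = x \<and> Z \<omega> = z} \<omega>1 *
           (measure p {\<omega>. Y \<omega> = y \<and> Z \<omega> = z} / measure p {\<omega>. Z \<omega> = z}) \<partial>p)"
  proof (intro integral_cong_AE, simp, simp, unfold AE_measure_pmf_iff, intro ballI)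
    fix \<omega>1 assume w: "\<omega>1 \<in> set_pmf p"
    have ne: "set_pmf p \<inter> {\<omega>. Z \<omega> = Z \<omega>1} \<noteq> {}" using w by auto
    show "pmf (map_pmf (\<lambda>\<omega>2. (X \<omega>1, Y \<omega>2, Z \<omega>1)) (cond_pmf p {\<omega>. Z \<omega> = Z \<omega>1})) (x, y, z) =
      indicator {\<omega>. X \<omega> = x \<and> Z \<omega> = z} \<omega>1 *
      (measure p {\<omega>. Y \<omega> = y \<and> Z \<omega> = z} / measure p {\<omega>. Z \<omega> = z})"
    proof (cases "X \<omega>1 = x \<and> Z \<omega>1 = z")
      case True
      have "pmf (map_pmf (\<lambda>\<omega>2. (X \<omega>1, Y \<omega>2, Z \<omega>1)) (cond_pmf p {\<omega>. Z \<omega> = Z \<omega>1})) (x, y, z)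
          = measure (cond_pmf p {\<omega>. Z \<omega> = Z \<omega>1}) {\<omega>2. Y \<omega>2 = y}"
        using True by (simp add: pmf_map vimage_def)
      also have "\<dots> = measure p ({\<omega>. Z \<omega> = z} \<inter> {\<omega>2. Y \<omega>2 = y}) / measure p {\<omega>. Z \<omega> = z}"
        using measure_cond_pmf[OF ne] True by simp
      also have "{\<omega>. Z \<omega> = z} \<inter> {\<omega>2. Y \<omega>2 = y} = {\<omega>. Y \<omega> = y \<and> Z \<omega> = z}" by auto
      finally show ?thesis using True by simp
    next
      case False
      then have "(\<lambda>\<omega>2. (X \<omega>1, Y \<omega>2, Z \<omega>1)) -` {(x, y, z)} = {}" by auto
      then show ?thesis using False by (simp add: pmf_map)
    qed
  qed
  also have "\<dots> = measure p {\<omega>. X \<omega> = x \<and> Z \<omega> = z} *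
           (measure p {\<omega>. Y \<omega> = y \<and> Z \<omega> = z} / measure p {\<omega>. Z \<omega> = z})"
    by simp
  finally show ?thesis .
qed


lemma gibbs_real:
  fixes a b c d :: real
  assumes "0 < a" "0 < b" "0 < c" "0 < d"
  shows "- ln a + - ln b + 1 \<le> - ln c + - ln d + c * d / (a * b)"
proof -
  have x: "0 < c * d / (a * b)" using assms by simp
  have "ln (c * d / (a * b)) \<le> c * d / (a * b) - 1" using ln_le_minus_one[OF x] .
  moreover have "ln (c * d / (a * b)) = ln c + ln d - ln a - ln b"
    using assms by (simp add: ln_div ln_mult)
  ultimately show ?thesis by simp
qed

lemma ennreal_plus3:
  fixes x y z :: real
  assumes "0 \<le> x" "0 \<le> y" "0 \<le> z"
  shows "ennreal x + ennreal y + ennreal z = ennreal (x + y + z)"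
  using assms by (simp add: ennreal_plus)

lemma Hn_submod:
  fixes p :: "'a pmf" and X :: "'a \<Rightarrow> 'x" and Y :: "'a \<Rightarrow> 'y" and Z :: "'a \<Rightarrow> 'z"
  shows "Hn p (\<lambda>\<omega>. (X \<omega>, Y \<omega>, Z \<omega>)) + Hn p Z \<le> Hn p (\<lambda>\<omega>. (X \<omega>, Z \<omega>)) + Hn p (\<lambda>\<omega>. (Y \<omega>, Z \<omega>))"
proof -
  define V where "V = (\<lambda>\<omega>. (X \<omega>, Y \<omega>, Z \<omega>))"
  define XZ where "XZ = (\<lambda>\<omega>. (X \<omega>, Z \<omega>))"
  define YZ where "YZ = (\<lambda>\<omega>. (Y \<omega>, Z \<omega>))"
  define R where "R = bind_pmf p (\<lambda>\<omega>1. map_pmf (\<lambda>\<omega>2. (X \<omega>1, Y \<omega>2, Z \<omega>1)) (cond_pmf p {\<omega>. Z \<omega> = Z \<omega>1}))"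
  define b' where "b' z = measure p {\<omega>. Z \<omega> = z}" for z
  define c' where "c' x z = measure p {\<omega>. X \<omega> = x \<and> Z \<omega> = z}" for x z
  define d' where "d' y z = measure p {\<omega>. Y \<omega> = y \<and> Z \<omega> = z}" for y z
  define t' where "t' v = (case v of (x, y, z) \<Rightarrow> c' x z * d' y z / (pmf (map_pmf V p) v * b' z))" for v
  define LA where "LA \<omega> = ennreal (- ln (pmf (map_pmf V p) (V \<omega>)))" for \<omega>
  define LB where "LB \<omega> = ennreal (- ln (pmf (map_pmf Z p) (Z \<omega>)))" for \<omega>
  define LC where "LC \<omega> = ennreal (- ln (pmf (map_pmf XZ p) (XZ \<omega>)))" for \<omega>
  define LD where "LD \<omega> = ennreal (- ln (pmf (map_pmf YZ p) (YZ \<omega>)))" for \<omega>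
  have pw: "AE \<omega> in p. LA \<omega> + LB \<omega> + 1 \<le> LC \<omega> + LD \<omega> + ennreal (t' (V \<omega>))"
    unfolding AE_measure_pmf_iff
  proof (intro ballI)
    fix \<omega> assume w: "\<omega> \<in> set_pmf p"
    define a where "a = pmf (map_pmf V p) (V \<omega>)"
    define b where "b = pmf (map_pmf Z p) (Z \<omega>)"
    define c where "c = pmf (map_pmf XZ p) (XZ \<omega>)"
    define d where "d = pmf (map_pmf YZ p) (YZ \<omega>)"
    have pos: "0 < a" "0 < b" "0 < c" "0 < d"
      unfolding a_def b_def c_def d_def using pmf_map_pos[OF w] by auto
    have bb: "b = b' (Z \<omega>)" unfolding b_def b'_def by (simp add: pmf_map_eq)
    have cc: "c = c' (X \<omega>) (Z \<omega>)" unfolding c_def c'_def using pmf_map_eq[of XZ p \<omega>] by (simp add: XZ_def)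
    have dd: "d = d' (Y \<omega>) (Z \<omega>)" unfolding d_def d'_def using pmf_map_eq[of YZ p \<omega>] by (simp add: YZ_def)
    have tt: "t' (V \<omega>) = c * d / (a * b)"
      unfolding t'_def a_def using bb cc dd by (simp add: V_def)
    have ineq: "- ln a + - ln b + 1 \<le> - ln c + - ln d + c * d / (a * b)"
      using gibbs_real[OF pos] .
    have n1: "0 \<le> - ln a" "0 \<le> - ln b" "0 \<le> - ln c" "0 \<le> - ln d"
      unfolding a_def b_def c_def d_def by (rule ln_surprisal_nonneg)+
    have n2: "0 \<le> c * d / (a * b)" using pos by simp
    have "LA \<omega> + LB \<omega> + 1 = ennreal (- ln a + - ln b + 1)"
      unfolding LA_def LB_def a_def[symmetric] b_def[symmetric]
      using ennreal_plus3[OF n1(1) n1(2), of 1] by simp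
    also have "\<dots> \<le> ennreal (- ln c + - ln d + c * d / (a * b))"
      using ineq by (rule ennreal_leI)
    also have "\<dots> = LC \<omega> + LD \<omega> + ennreal (t' (V \<omega>))"
      unfolding LC_def LD_def c_def[symmetric] d_def[symmetric] tt
      using ennreal_plus3[OF n1(3) n1(4) n2] by simp
    finally show "LA \<omega> + LB \<omega> + 1 \<le> LC \<omega> + LD \<omega> + ennreal (t' (V \<omega>))" .
  qed
  have int1: "(\<integral>\<^sup>+\<omega>. LA \<omega> + LB \<omega> + 1 \<partial>p) = Hn p V + Hn p Z + 1"
    unfolding Hn_def LA_def LB_def
    by (simp add: nn_integral_add measure_pmf.emeasure_space_1)
  have int2: "(\<integral>\<^sup>+\<omega>. LC \<omega> + LD \<omega> + ennreal (t' (V \<omega>)) \<partial>p) =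
     Hn p XZ + Hn p YZ + (\<integral>\<^sup>+\<omega>. ennreal (t' (V \<omega>)) \<partial>p)"
    unfolding Hn_def LC_def LD_def
    by (simp add: nn_integral_add)
  have Et: "(\<integral>\<^sup>+\<omega>. ennreal (t' (V \<omega>)) \<partial>p) \<le> 1"
  proof -
    have "(\<integral>\<^sup>+\<omega>. ennreal (t' (V \<omega>)) \<partial>p) = (\<integral>\<^sup>+v. ennreal (t' v) \<partial>map_pmf V p)"
      by simp
    also have "\<dots> = (\<integral>\<^sup>+v. ennreal (pmf (map_pmf V p) v) * ennreal (t' v) \<partial>count_space UNIV)"
      by (rule nn_integral_measure_pmf)
    also have "\<dots> \<le> (\<integral>\<^sup>+v. ennreal (pmf R v) \<partial>count_space UNIV)"
    proof (intro nn_integral_mono)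
      fix v :: "'x \<times> 'y \<times> 'z"
      obtain x y z where v: "v = (x, y, z)" by (cases v) auto
      show "ennreal (pmf (map_pmf V p) v) * ennreal (t' v) \<le> ennreal (pmf R v)"
      proof (cases "pmf (map_pmf V p) v = 0")
        case True then show ?thesis by simp
      next
        case False
        then have "v \<in> set_pmf (map_pmf V p)" by (metis set_pmf_iff)
        then obtain \<omega> where w: "\<omega> \<in> set_pmf p" and vw: "V \<omega> = v" by auto
        have "0 < b' z" unfolding b'_def
          using w vw v by (intro measure_pmf_posI[of \<omega>]) (auto simp: V_def)
        then have "pmf (map_pmf V p) v * t' v = c' x z * (d' y z / b' z)"
          using False v by (simp add: t'_def)
        also have "\<dots> = pmf R v"
          unfolding R_def v c'_def d'_def b'_def by (rule pmf_R[symmetric])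
        finally show ?thesis by (simp add: ennreal_mult'[symmetric])
      qed
    qed
    also have "\<dots> = 1"
      by (simp add: nn_integral_pmf measure_pmf.emeasure_space_1)
    finally show ?thesis .
  qed
  have "Hn p V + Hn p Z + 1 \<le> Hn p XZ + Hn p YZ + (\<integral>\<^sup>+\<omega>. ennreal (t' (V \<omega>)) \<partial>p)"
    using nn_integral_mono_AE[OF pw] int1 int2 by simp
  also have "\<dots> \<le> Hn p XZ + Hn p YZ + 1"
    using Et by (simp add: add_left_mono)
  finally have "1 + (Hn p V + Hn p Z) \<le> 1 + (Hn p XZ + Hn p YZ)"
    by (simp add: ac_simps)
  then show ?thesis
    unfolding V_def XZ_def YZ_def by (simp add: ennreal_add_left_cancel_le)
qed


lemma rv_eq_iff: "rv A \<omega> = rv A \<omega>' \<longleftrightarrow> (\<forall>i\<in>A. \<omega> i = \<omega>' i)"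
  unfolding rv_def fun_eq_iff by (metis (full_types))

lemma jointrv_eq_iff:
  "jointrv M \<omega> = jointrv M \<omega>' \<longleftrightarrow> (\<forall>i\<in>\<Union>(set_mset M). \<omega> i = \<omega>' i)"
proof -
  have "jointrv M \<omega> = jointrv M \<omega>' \<longleftrightarrow> (\<forall>A. A \<in># M \<longrightarrow> rv A \<omega> = rv A \<omega>')"
    unfolding jointrv_def fun_eq_iff by (metis (full_types))
  also have "\<dots> \<longleftrightarrow> (\<forall>i\<in>\<Union>(set_mset M). \<omega> i = \<omega>' i)"
    unfolding rv_eq_iff by blast
  finally show ?thesis .
qed

definition hP :: "(nat \<Rightarrow> nat) pmf \<Rightarrow> nat set \<Rightarrow> real" where
  "hP P A = ent (map_pmf (rv A) P)"

definition TC :: "(nat set \<Rightarrow> real) \<Rightarrow> nat set \<Rightarrow> nat set multiset \<Rightarrow> real" where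
  "TC h C M = sum_mset (image_mset (\<lambda>Q. h (Q \<union> C) - h C) M) - (h (\<Union>(set_mset M) \<union> C) - h C)"

lemma condent_rv: "condent P (rv Q) (rv C) = hP P (Q \<union> C) - hP P C"
proof -
  have "Hn P (\<lambda>\<omega>. (rv Q \<omega>, rv C \<omega>)) = Hn P (rv (Q \<union> C))"
    by (rule Hn_cong) (auto simp: rv_eq_iff)
  then show ?thesis unfolding condent_def hP_def ent_Hn by simp
qed

lemma condent_jointrv: "condent P (jointrv M) (rv C) = hP P (\<Union>(set_mset M) \<union> C) - hP P C"
proof -
  have "Hn P (\<lambda>\<omega>. (jointrv M \<omega>, rv C \<omega>)) = Hn P (rv (\<Union>(set_mset M) \<union> C))"
    by (rule Hn_cong) (auto simp: rv_eq_iff jointrv_eq_iff)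
  then show ?thesis unfolding condent_def hP_def ent_Hn by simp
qed

lemma valid_TC: "valid P K \<longleftrightarrow> TC (hP P) (fst K) (snd K) = 0"
  unfolding valid_def TC_def condent_rv condent_jointrv ..

lemma Hn_rv_finite:
  assumes adm: "admissible n P" and A: "A \<subseteq> {1..n}"
  shows "Hn P (rv A) < \<infinity>"
proof -
  have fin: "finite A" using A finite_subset by blast
  from fin A show ?thesis
  proof (induction A rule: finite_induct)
    case empty
    have "Hn P (rv {}) = 0" by (rule Hn_const) (simp add: rv_def)
    then show ?case by simp
  next
    case (insert i A)
    have i: "i \<in> {1..n}" using insert.prems by auto
    have "finite_ent (map_pmf (\<lambda>\<omega>. \<omega> i) P)" using adm i unfolding admissible_def by blast
    then have "Hn P (\<lambda>\<omega>. \<omega> i) < \<infinity>" by (simp add: finite_ent_Hn)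
    moreover have "Hn P (rv {i}) = Hn P (\<lambda>\<omega>. \<omega> i)"
      by (rule Hn_cong) (simp add: rv_eq_iff)
    ultimately have fi: "Hn P (rv {i}) < \<infinity>" by simp
    have fA: "Hn P (rv A) < \<infinity>" using insert by auto
    have sm: "Hn P (\<lambda>\<omega>. (rv {i} \<omega>, rv A \<omega>, ())) + Hn P (\<lambda>\<omega>. ())
        \<le> Hn P (\<lambda>\<omega>. (rv {i} \<omega>, ())) + Hn P (\<lambda>\<omega>. (rv A \<omega>, ()))"
      by (rule Hn_submod)
    have e1: "Hn P (\<lambda>\<omega>. (rv {i} \<omega>, rv A \<omega>, ())) = Hn P (rv (insert i A))"
      by (rule Hn_cong) (auto simp: rv_eq_iff)
    have e2: "Hn P (\<lambda>\<omega>. ()) = 0" by (rule Hn_const) simp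
    have e3: "Hn P (\<lambda>\<omega>. (rv {i} \<omega>, ())) = Hn P (rv {i})"
      by (rule Hn_cong) simp
    have e4: "Hn P (\<lambda>\<omega>. (rv A \<omega>, ())) = Hn P (rv A)"
      by (rule Hn_cong) simp
    have "Hn P (rv (insert i A)) \<le> Hn P (rv {i}) + Hn P (rv A)"
      using sm e1 e2 e3 e4 by simp
    also have "\<dots> < \<infinity>" using fi fA by simp
    finally show ?case .
  qed
qed

lemma Hn_rv_submod: "Hn P (rv (A \<union> B)) + Hn P (rv (A \<inter> B)) \<le> Hn P (rv A) + Hn P (rv B)"
proof -
  have sm: "Hn P (\<lambda>\<omega>. (rv (A - B) \<omega>, rv (B - A) \<omega>, rv (A \<inter> B) \<omega>)) + Hn P (rv (A \<inter> B))
      \<le> Hn P (\<lambda>\<omega>. (rv (A - B) \<omega>, rv (A \<inter> B) \<omega>)) + Hn P (\<lambda>\<omega>. (rv (B - A) \<omega>, rv (A \<inter> B) \<omega>))"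
    by (rule Hn_submod)
  have e1: "Hn P (\<lambda>\<omega>. (rv (A - B) \<omega>, rv (B - A) \<omega>, rv (A \<inter> B) \<omega>)) = Hn P (rv (A \<union> B))"
    by (rule Hn_cong) (auto simp: rv_eq_iff)
  have e2: "Hn P (\<lambda>\<omega>. (rv (A - B) \<omega>, rv (A \<inter> B) \<omega>)) = Hn P (rv A)"
    by (rule Hn_cong) (auto simp: rv_eq_iff)
  have e3: "Hn P (\<lambda>\<omega>. (rv (B - A) \<omega>, rv (A \<inter> B) \<omega>)) = Hn P (rv B)"
    by (rule Hn_cong) (auto simp: rv_eq_iff)
  show ?thesis using sm e1 e2 e3 by simp
qed

lemma Hn_rv_mono: "A \<subseteq> B \<Longrightarrow> Hn P (rv A) \<le> Hn P (rv B)"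
  by (rule Hn_mono) (auto simp: rv_eq_iff)

definition polymat :: "(nat set \<Rightarrow> real) \<Rightarrow> bool" where
  "polymat h \<longleftrightarrow> (\<forall>A B. A \<subseteq> B \<longrightarrow> h A \<le> h B) \<and> (\<forall>A B. h (A \<union> B) + h (A \<inter> B) \<le> h A + h B)"

lemma polymat_hP:
  assumes adm: "admissible n P"
  shows "polymat (\<lambda>A. hP P (A \<inter> {1..n}))"
  unfolding polymat_def
proof (intro conjI allI impI)
  fix A B :: "nat set" assume "A \<subseteq> B"
  then have "Hn P (rv (A \<inter> {1..n})) \<le> Hn P (rv (B \<inter> {1..n}))"
    by (intro Hn_rv_mono) auto
  moreover have "Hn P (rv (B \<inter> {1..n})) < \<infinity>" using Hn_rv_finite[OF adm, of "B \<inter> {1..n}"] by auto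
  ultimately show "hP P (A \<inter> {1..n}) \<le> hP P (B \<inter> {1..n})"
    unfolding hP_def ent_Hn by (simp add: enn2real_mono)
next
  fix A B :: "nat set"
  define A' where "A' = A \<inter> {1..n}"
  define B' where "B' = B \<inter> {1..n}"
  have u: "(A \<union> B) \<inter> {1..n} = A' \<union> B'" and i: "(A \<inter> B) \<inter> {1..n} = A' \<inter> B'"
    unfolding A'_def B'_def by auto
  have fA: "Hn P (rv A') < \<infinity>" using Hn_rv_finite[OF adm, of A'] unfolding A'_def by auto
  have fB: "Hn P (rv B') < \<infinity>" using Hn_rv_finite[OF adm, of B'] unfolding B'_def by auto
  have fU: "Hn P (rv (A' \<union> B')) < \<infinity>" using Hn_rv_finite[OF adm, of "A' \<union> B'"] unfolding A'_def B'_def by auto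
  have fI: "Hn P (rv (A' \<inter> B')) < \<infinity>" using Hn_rv_finite[OF adm, of "A' \<inter> B'"] unfolding A'_def B'_def by auto
  have "enn2real (Hn P (rv (A' \<union> B')) + Hn P (rv (A' \<inter> B'))) \<le> enn2real (Hn P (rv A') + Hn P (rv B'))"
    using Hn_rv_submod[of P A' B'] fA fB by (intro enn2real_mono) auto
  then show "hP P ((A \<union> B) \<inter> {1..n}) + hP P ((A \<inter> B) \<inter> {1..n}) \<le> hP P (A \<inter> {1..n}) + hP P (B \<inter> {1..n})"
    unfolding u i A'_def[symmetric] B'_def[symmetric] hP_def ent_Hn
    using fA fB fU fI by (simp add: enn2real_plus)
qed


definition CI :: "(nat set \<Rightarrow> real) \<Rightarrow> nat set \<Rightarrow> nat set \<Rightarrow> nat set \<Rightarrow> real" where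
  "CI h A B C = h (A \<union> C) + h (B \<union> C) - h (A \<union> B \<union> C) - h C"

lemma polymat_mono: "polymat h \<Longrightarrow> A \<subseteq> B \<Longrightarrow> h A \<le> h B"
  unfolding polymat_def by blast

lemma polymat_submod: "polymat h \<Longrightarrow> h (A \<union> B) + h (A \<inter> B) \<le> h A + h B"
  unfolding polymat_def by blast

lemma CI_nonneg:
  assumes "polymat h" shows "0 \<le> CI h A B C"
proof -
  have "h ((A \<union> C) \<union> (B \<union> C)) + h ((A \<union> C) \<inter> (B \<union> C)) \<le> h (A \<union> C) + h (B \<union> C)"
    by (rule polymat_submod[OF assms])
  moreover have "h C \<le> h ((A \<union> C) \<inter> (B \<union> C))" by (rule polymat_mono[OF assms]) auto
  moreover have "(A \<union> C) \<union> (B \<union> C) = A \<union> B \<union> C" by auto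
  ultimately show ?thesis unfolding CI_def by simp
qed

lemma CI_sym: "CI h A B C = CI h B A C"
  unfolding CI_def by (simp add: Un_ac)

lemma CI_chain: "CI h (A \<union> X) B C = CI h X B C + CI h A B (C \<union> X)"
proof -
  have e1: "h (A \<union> X \<union> C) = h (A \<union> (C \<union> X))" by (rule arg_cong[of _ _ h]) auto
  have e2: "h (A \<union> X \<union> B \<union> C) = h (A \<union> B \<union> (C \<union> X))" by (rule arg_cong[of _ _ h]) auto
  have e3: "h (B \<union> (C \<union> X)) = h (X \<union> B \<union> C)" by (rule arg_cong[of _ _ h]) auto
  have e4: "h (C \<union> X) = h (X \<union> C)" by (rule arg_cong[of _ _ h]) auto
  show ?thesis unfolding CI_def using e1 e2 e3 e4 by simp
qed

lemma CI_mono1: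
  assumes "polymat h" "A \<subseteq> A'" shows "CI h A B C \<le> CI h A' B C"
proof -
  have "CI h (A' \<union> A) B C = CI h A B C + CI h A' B (C \<union> A)" by (rule CI_chain)
  moreover have "A' \<union> A = A'" using assms(2) by auto
  ultimately show ?thesis using CI_nonneg[OF assms(1), of A' B "C \<union> A"] by simp
qed

lemma CI_mono:
  assumes "polymat h" "A \<subseteq> A'" "B \<subseteq> B'" shows "CI h A B C \<le> CI h A' B' C"
proof -
  have "CI h A B C \<le> CI h A' B C" by (rule CI_mono1[OF assms(1,2)])
  also have "\<dots> = CI h B A' C" by (rule CI_sym)
  also have "\<dots> \<le> CI h B' A' C" by (rule CI_mono1[OF assms(1,3)])
  also have "\<dots> = CI h A' B' C" by (rule CI_sym)
  finally show ?thesis .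
qed

lemma CI_cond:
  assumes "polymat h" shows "CI h A B (C \<union> X) \<le> CI h (A \<union> X) B C"
  using CI_chain[of h A X B C] CI_nonneg[OF assms, of X B C] by simp

lemma CI_self: "CI h A A C = h (A \<union> C) - h C"
  unfolding CI_def by simp

lemma Union_set_mset_plus: "\<Union>(set_mset (M1 + M2)) = \<Union>(set_mset M1) \<union> \<Union>(set_mset M2)"
  by simp

lemma TC_empty[simp]: "TC h C {#} = 0"
  unfolding TC_def by simp

lemma TC_single[simp]: "TC h C {#Q#} = 0"
  unfolding TC_def by simp

lemma TC_union: "TC h C (M1 + M2) = TC h C M1 + TC h C M2 + CI h (\<Union>(set_mset M1)) (\<Union>(set_mset M2)) C"
proof -
  have e: "\<Union>(set_mset M1) \<union> \<Union>(set_mset M2) \<union> C = \<Union>(set_mset (M1 + M2)) \<union> C" by simp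
  show ?thesis unfolding TC_def CI_def e by simp
qed

lemma TC_add: "TC h C (add_mset Q M) = TC h C M + CI h Q (\<Union>(set_mset M)) C"
  using TC_union[of h C "{#Q#}" M] by simp

lemma TC_nonneg:
  assumes "polymat h" shows "0 \<le> TC h C M"
proof (induction M)
  case empty then show ?case by simp
next
  case (add Q M) then show ?case using CI_nonneg[OF assms, of Q "\<Union>(set_mset M)" C]
    by (simp add: TC_add)
qed

lemma CI_le_TC:
  assumes "polymat h" shows "CI h (\<Union>(set_mset M1)) (\<Union>(set_mset M2)) C \<le> TC h C (M1 + M2)"
  using TC_union[of h C M1 M2] TC_nonneg[OF assms, of C M1] TC_nonneg[OF assms, of C M2] by simp

lemma TC_size_le1: "size M \<le> 1 \<Longrightarrow> TC h C M = 0"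
  by (cases M) (auto simp: TC_add CI_def)

lemma TC_add_empty: "TC h C (add_mset {} M) = TC h C M"
  unfolding TC_add CI_def by simp

lemma TC_filter_ne: "TC h C (filter_mset (\<lambda>A. A \<noteq> {}) M) = TC h C M"
proof (induction M)
  case empty then show ?case by simp
next
  case (add Q M)
  show ?case
  proof (cases "Q = {}")
    case True then show ?thesis using add by (simp add: TC_add_empty)
  next
    case False
    have "\<Union>(set_mset (filter_mset (\<lambda>A. A \<noteq> {}) M)) = \<Union>(set_mset M)" by auto
    then show ?thesis using add False by (simp add: TC_add)
  qed
qed

lemma TC_transfer:
  assumes "\<And>X. h (X \<union> E) = h' ((X - I) \<union> E')"
  shows "TC h E M = TC h' E' (image_mset (\<lambda>Q. Q - I) M)"
proof -
  have hE: "h E = h' E'" using assms[of "{}"] by simp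
  have "sum_mset (image_mset (\<lambda>Q. h (Q \<union> E) - h E) M) =
        sum_mset (image_mset (\<lambda>Q. h' (Q \<union> E') - h' E') (image_mset (\<lambda>Q. Q - I) M))"
    by (simp add: image_mset.compositionality o_def assms hE)
  moreover have "h (\<Union>(set_mset M) \<union> E) = h' (\<Union>(set_mset (image_mset (\<lambda>Q. Q - I) M)) \<union> E')"
  proof -
    have "\<Union>(set_mset (image_mset (\<lambda>Q. Q - I) M)) = \<Union>(set_mset M) - I" by auto
    then show ?thesis using assms[of "\<Union>(set_mset M)"] by simp
  qed
  ultimately show ?thesis unfolding TC_def hE by simp
qed

lemma TC_image_cond: "TC h C (image_mset (\<lambda>Q. Q - C) M) = TC h C M"
  using TC_transfer[of h C h C C M] by simp

lemma absorb:
  assumes "polymat h" "h (I \<union> C) = h C" "C \<subseteq> E" "C \<inter> I = {}"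
  shows "h (X \<union> E) = h ((X - I) \<union> (E - I))"
proof -
  have key: "h (Y \<union> I) = h Y" if "C \<subseteq> Y" for Y
  proof -
    have "h (Y \<union> (I \<union> C)) + h (Y \<inter> (I \<union> C)) \<le> h Y + h (I \<union> C)"
      by (rule polymat_submod[OF assms(1)])
    moreover have "h C \<le> h (Y \<inter> (I \<union> C))" by (rule polymat_mono[OF assms(1)]) (use that in auto)
    moreover have "Y \<union> (I \<union> C) = Y \<union> I" using that by auto
    moreover have "h Y \<le> h (Y \<union> I)" by (rule polymat_mono[OF assms(1)]) auto
    ultimately show ?thesis using assms(2) by simp
  qed
  have c1: "C \<subseteq> X \<union> E" using assms(3) by auto
  have c2: "C \<subseteq> (X - I) \<union> (E - I)" using assms(3,4) by auto
  have s: "X \<union> E \<union> I = ((X - I) \<union> (E - I)) \<union> I" by auto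
  show ?thesis using key[OF c1] key[OF c2] s by simp
qed

lemma TC_absorb:
  assumes "polymat h" "h (I \<union> C) = h C" "C \<subseteq> E" "C \<inter> I = {}"
  shows "TC h E M = TC h (E - I) (image_mset (\<lambda>Q. Q - I) M)"
  by (rule TC_transfer) (rule absorb[OF assms])


lemma size_filter_ge2_obtain:
  assumes "2 \<le> size (filter_mset P M)"
  obtains Qa Qb R where "M = add_mset Qa (add_mset Qb R)" "P Qa" "P Qb"
proof -
  have "filter_mset P M \<noteq> {#}"
  proof
    assume "filter_mset P M = {#}"
    then have "size (filter_mset P M) = 0" by simp
    then show False using assms by linarith
  qed
  then obtain Qa where Qa: "Qa \<in># filter_mset P M" by (rule multiset_nonemptyE)
  define M1 where "M1 = M - {#Qa#}"
  have M: "M = add_mset Qa M1" unfolding M1_def using Qa by auto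
  have PQa: "P Qa" using Qa by auto
  have "filter_mset P M = add_mset Qa (filter_mset P M1)" using M PQa by simp
  then have "1 \<le> size (filter_mset P M1)" using assms by simp
  then have "filter_mset P M1 \<noteq> {#}"
  proof (intro notI)
    assume a: "1 \<le> size (filter_mset P M1)" "filter_mset P M1 = {#}"
    then have "size (filter_mset P M1) = 0" by simp
    then show False using a(1) by linarith
  qed
  then obtain Qb where Qb: "Qb \<in># filter_mset P M1" by (rule multiset_nonemptyE)
  define R where "R = M1 - {#Qb#}"
  have M1: "M1 = add_mset Qb R" unfolding R_def using Qb by auto
  have PQb: "P Qb" using Qb by simp
  show ?thesis using that[of Qa Qb R] M M1 PQa PQb by simp
qed

lemma repI_det:
  assumes h: "polymat h" and T: "TC h C M = 0" and two: "2 \<le> size (filter_mset (\<lambda>Q. i \<in> Q) M)"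
  shows "h ({i} \<union> C) = h C"
proof -
  obtain Qa Qb R where M: "M = add_mset Qa (add_mset Qb R)" and i: "i \<in> Qa" "i \<in> Qb"
    using size_filter_ge2_obtain[OF two] by blast
  have "CI h Qa (\<Union>(set_mset (add_mset Qb R))) C \<le> TC h C ({#Qa#} + add_mset Qb R)"
    using CI_le_TC[OF h, of "{#Qa#}" "add_mset Qb R" C] by simp
  also have "{#Qa#} + add_mset Qb R = M" using M by simp
  also have "TC h C M = 0" using T .
  finally have le: "CI h Qa (\<Union>(set_mset (add_mset Qb R))) C \<le> 0" .
  have "CI h {i} {i} C \<le> CI h Qa (\<Union>(set_mset (add_mset Qb R))) C"
    using i by (intro CI_mono[OF h]) auto
  then have "h ({i} \<union> C) \<le> h C" using le by (simp add: CI_self)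
  moreover have "h C \<le> h ({i} \<union> C)" by (rule polymat_mono[OF h]) auto
  ultimately show ?thesis by simp
qed

lemma det_set:
  assumes h: "polymat h" and fin: "finite I" and each: "\<And>i. i \<in> I \<Longrightarrow> h ({i} \<union> C) = h C"
  shows "h (I \<union> C) = h C"
  using fin each
proof (induction I rule: finite_induct)
  case empty then show ?case by simp
next
  case (insert i J)
  have IH: "h (J \<union> C) = h C" using insert by auto
  have hi: "h ({i} \<union> C) = h C" using insert by auto
  have "h ((J \<union> C) \<union> ({i} \<union> C)) + h ((J \<union> C) \<inter> ({i} \<union> C)) \<le> h (J \<union> C) + h ({i} \<union> C)"
    by (rule polymat_submod[OF h])
  moreover have "h C \<le> h ((J \<union> C) \<inter> ({i} \<union> C))" by (rule polymat_mono[OF h]) auto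
  moreover have "(J \<union> C) \<union> ({i} \<union> C) = insert i J \<union> C" by auto
  moreover have "h C \<le> h (insert i J \<union> C)" by (rule polymat_mono[OF h]) auto
  ultimately show ?case using IH hi by simp
qed

lemma size_filter_image_le:
  assumes "\<And>Q. P (f Q) \<Longrightarrow> P' Q"
  shows "size (filter_mset P (image_mset f M)) \<le> size (filter_mset P' M)"
proof (induction M)
  case empty then show ?case by simp
next
  case (add x M) then show ?case using assms by auto
qed

lemma Pparts_mem: "X \<in># Pparts I M \<Longrightarrow> \<exists>Q. Q \<in># M \<and> X = Q - I \<and> X \<noteq> {}"
  unfolding Pparts_def by auto

lemma Pparts_disj:
  assumes X: "X \<in># Pparts (repI M) M" and Y: "Y \<in># Pparts (repI M) M - {#X#}"
  shows "X \<inter> Y = {}"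
proof (rule ccontr)
  assume "X \<inter> Y \<noteq> {}"
  then obtain x where x: "x \<in> X" "x \<in> Y" by auto
  define Pp where "Pp = Pparts (repI M) M"
  have sub: "{#X, Y#} \<subseteq># Pp" using X Y unfolding Pp_def
    by (metis add_mset_add_single insert_DiffM mset_subset_eq_mono_add_right_cancel single_subset_iff subset_mset.add_diff_inverse subset_mset.le_add_same_cancel1 union_commute)
  have "size (filter_mset (\<lambda>A. x \<in> A) {#X, Y#}) \<le> size (filter_mset (\<lambda>A. x \<in> A) Pp)"
    by (intro size_mset_mono multiset_filter_mono sub)
  then have "2 \<le> size (filter_mset (\<lambda>A. x \<in> A) Pp)" using x by simp
  also have "size (filter_mset (\<lambda>A. x \<in> A) Pp) \<le> size (filter_mset (\<lambda>Q. x \<in> Q) M)"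
  proof -
    have "filter_mset (\<lambda>A. x \<in> A) Pp = filter_mset (\<lambda>A. x \<in> A) (image_mset (\<lambda>Q. Q - repI M) M)"
      unfolding Pp_def Pparts_def filter_filter_mset by (rule filter_mset_cong0) auto
    moreover have "size (filter_mset (\<lambda>A. x \<in> A) (image_mset (\<lambda>Q. Q - repI M) M)) \<le> size (filter_mset (\<lambda>Q. x \<in> Q) M)"
      by (rule size_filter_image_le) auto
    ultimately show ?thesis by simp
  qed
  finally have two: "2 \<le> size (filter_mset (\<lambda>Q. x \<in> Q) M)" .
  then have "2 \<le> size M" using size_filter_mset_lesseq[of "\<lambda>Q. x \<in> Q" M] by linarith
  then have "x \<in> repI M" using two unfolding repI_def by simp
  moreover obtain Q where "X = Q - repI M" using Pparts_mem[OF X] by auto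
  ultimately show False using x by auto
qed


lemma in_diff_add: "B \<in># M - {#A#} \<Longrightarrow> B \<in># add_mset t M - {#A#}"
  by (simp add: in_diff_count)

lemma core_sep:
  assumes h: "polymat h" and TP: "TC h C Ps = 0"
    and disj: "\<And>X Y. X \<in># Ps \<Longrightarrow> Y \<in># Ps - {#X#} \<Longrightarrow> X \<inter> Y = {}"
    and CE: "C \<subseteq> E" and EP: "E \<subseteq> C \<union> \<Union>(set_mset Ps)"
  shows "\<Union>(set_mset T) \<subseteq> \<Union>(set_mset Ps) \<Longrightarrow>
    (\<forall>A B m1 m2. A \<in># T \<and> B \<in># T - {#A#} \<and> m1 \<in> A \<and> m2 \<in> B \<longrightarrow>
       (\<exists>X Y. X \<in># Ps \<and> Y \<in># Ps - {#X#} \<and> m1 \<in> X \<and> m2 \<in> Y)) \<Longrightarrow> TC h E T = 0"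
proof (induction T)
  case empty show ?case by simp
next
  case (add t T0)
  have sub0: "\<Union>(set_mset T0) \<subseteq> \<Union>(set_mset Ps)" using add.prems(1) by auto
  have sep0: "\<forall>A B m1 m2. A \<in># T0 \<and> B \<in># T0 - {#A#} \<and> m1 \<in> A \<and> m2 \<in> B \<longrightarrow>
       (\<exists>X Y. X \<in># Ps \<and> Y \<in># Ps - {#X#} \<and> m1 \<in> X \<and> m2 \<in> Y)"
  proof (intro allI impI)
    fix A B m1 m2
    assume a: "A \<in># T0 \<and> B \<in># T0 - {#A#} \<and> m1 \<in> A \<and> m2 \<in> B"
    then have "A \<in># add_mset t T0 \<and> B \<in># add_mset t T0 - {#A#} \<and> m1 \<in> A \<and> m2 \<in> B"
      using in_diff_add by auto
    then show "\<exists>X Y. X \<in># Ps \<and> Y \<in># Ps - {#X#} \<and> m1 \<in> X \<and> m2 \<in> Y"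
      using add.prems(2) by blast
  qed
  have IH: "TC h E T0 = 0" using add.IH sub0 sep0 by blast
  define U0 where "U0 = \<Union>(set_mset T0)"
  define Pm where "Pm = filter_mset (\<lambda>P. P \<inter> t \<noteq> {}) Ps"
  define Pn where "Pn = filter_mset (\<lambda>P. \<not> (P \<inter> t \<noteq> {})) Ps"
  have PsU: "Ps = Pm + Pn" unfolding Pm_def Pn_def by (rule multiset_partition)
  have tPm: "t \<subseteq> \<Union>(set_mset Pm)"
  proof
    fix x assume x: "x \<in> t"
    then have "x \<in> \<Union>(set_mset Ps)" using add.prems(1) by auto
    then obtain P where P: "P \<in># Ps" "x \<in> P" by auto
    then have "P \<in># Pm" using x unfolding Pm_def by auto
    then show "x \<in> \<Union>(set_mset Pm)" using P by auto
  qed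
  have U0Pn: "U0 \<subseteq> \<Union>(set_mset Pn)"
  proof
    fix m2 assume "m2 \<in> U0"
    then obtain B where B: "B \<in># T0" "m2 \<in> B" unfolding U0_def by auto
    then have "m2 \<in> \<Union>(set_mset Ps)" using sub0 by auto
    then obtain P where P: "P \<in># Ps" "m2 \<in> P" by auto
    have "P \<inter> t = {}"
    proof (rule ccontr)
      assume "P \<inter> t \<noteq> {}"
      then obtain m1 where m1: "m1 \<in> P" "m1 \<in> t" by auto
      have Bin: "B \<in># add_mset t T0 - {#t#}" using B by simp
      have tin: "t \<in># add_mset t T0" by simp
      obtain X Y where XY: "X \<in># Ps" "Y \<in># Ps - {#X#}" "m1 \<in> X" "m2 \<in> Y"
        using add.prems(2)[rule_format, OF conjI[OF tin conjI[OF Bin conjI[OF m1(2) B(2)]]]] by blast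
      have XP: "X = P"
      proof (rule ccontr)
        assume "X \<noteq> P"
        then have "P \<in># Ps - {#X#}" using P by (simp add: in_diff_count)
        then have "X \<inter> P = {}" using disj XY(1) by blast
        then show False using XY(3) m1 by auto
      qed
      have YP: "Y = P"
      proof (rule ccontr)
        assume "Y \<noteq> P"
        have "Y \<in># Ps" using XY(2) by (meson in_diffD)
        then have "Y \<in># Ps - {#P#}" using \<open>Y \<noteq> P\<close> by (simp add: in_diff_count)
        then have "P \<inter> Y = {}" using disj P(1) by blast
        then show False using XY(4) P(2) by auto
      qed
      have "P \<inter> P = {}" using disj[of P P] XY(1,2) XP YP by simp
      then show False using P by auto
    qed
    then have "P \<in># Pn" using P unfolding Pn_def by auto
    then show "m2 \<in> \<Union>(set_mset Pn)" using P by auto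
  qed
  define Wm where "Wm = (E - C) \<inter> \<Union>(set_mset Pm)"
  define Wn where "Wn = (E - C) \<inter> \<Union>(set_mset Pn)"
  have Eeq: "E = (C \<union> Wn) \<union> Wm"
  proof -
    have "\<Union>(set_mset Ps) = \<Union>(set_mset Pm) \<union> \<Union>(set_mset Pn)" by (subst PsU) simp
    then show ?thesis using CE EP unfolding Wm_def Wn_def by auto
  qed
  have "CI h t U0 E = CI h t U0 ((C \<union> Wn) \<union> Wm)" using Eeq by simp
  also have "\<dots> \<le> CI h (t \<union> Wm) U0 (C \<union> Wn)" by (rule CI_cond[OF h])
  also have "\<dots> = CI h U0 (t \<union> Wm) (C \<union> Wn)" by (rule CI_sym)
  also have "\<dots> \<le> CI h (U0 \<union> Wn) (t \<union> Wm) C" by (rule CI_cond[OF h])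
  also have "\<dots> \<le> CI h (\<Union>(set_mset Pn)) (\<Union>(set_mset Pm)) C"
    using U0Pn tPm by (intro CI_mono[OF h]) (auto simp: Wm_def Wn_def)
  also have "\<dots> = CI h (\<Union>(set_mset Pm)) (\<Union>(set_mset Pn)) C" by (rule CI_sym)
  also have "\<dots> \<le> TC h C (Pm + Pn)" by (rule CI_le_TC[OF h])
  also have "\<dots> = 0" using TP PsU by simp
  finally have "CI h t U0 E \<le> 0" .
  then have "CI h t U0 E = 0" using CI_nonneg[OF h, of t U0 E] by simp
  then show ?case using IH by (simp add: TC_add U0_def)
qed


lemma can_None_iff: "can K = None \<longleftrightarrow> size (snd K) \<le> 1"
  by (simp add: can_def Let_def)

lemma canpur_Some_None_iff: "canpur (Some K) = None \<longleftrightarrow> size (snd (pur K)) \<le> 1"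
  by (simp add: canpur_def can_None_iff)

lemma pur_fst[simp]: "fst (pur K) = fst K"
  by (simp add: pur_def)

lemma pur_snd: "snd (pur K) = filter_mset (\<lambda>Q. Q \<noteq> {}) (image_mset (\<lambda>Q. Q - fst K) (snd K))"
  by (simp add: pur_def)

lemma pur_mem:
  assumes "Q \<in># snd (pur K)"
  shows "Q \<noteq> {} \<and> Q \<inter> fst K = {} \<and> (\<exists>Q0. Q0 \<in># snd K \<and> Q = Q0 - fst K)"
  using assms unfolding pur_snd by auto

lemma repI_ge2: "i \<in> repI M \<Longrightarrow> 2 \<le> size (filter_mset (\<lambda>Q. i \<in> Q) M)"
  unfolding repI_def by (auto split: if_splits)

lemma repI_sub: "repI M \<subseteq> \<Union>(set_mset M)"
proof
  fix i assume "i \<in> repI M"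
  then have "2 \<le> size (filter_mset (\<lambda>Q. i \<in> Q) M)" by (rule repI_ge2)
  then obtain Qa Qb R where "M = add_mset Qa (add_mset Qb R)" "i \<in> Qa"
    by (rule size_filter_ge2_obtain)
  then show "i \<in> \<Union>(set_mset M)" by auto
qed

lemma cmiI_disj: "cmiI K \<inter> fst K = {}"
  using repI_sub[of "snd (pur K)"] pur_mem[of _ K] unfolding cmiI_def by blast

lemma cmiI_sub: "cmiI K \<subseteq> \<Union>(set_mset (snd (pur K)))"
  unfolding cmiI_def by (rule repI_sub)

lemma cmiP_mem:
  assumes "X \<in># cmiP K"
  shows "X \<noteq> {} \<and> X \<inter> fst K = {} \<and> X \<inter> cmiI K = {} \<and> (\<exists>Q. Q \<in># snd (pur K) \<and> X = Q - cmiI K)"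
proof -
  obtain Q where Q: "Q \<in># snd (pur K)" "X = Q - cmiI K" "X \<noteq> {}"
    using Pparts_mem[of X "cmiI K" "snd (pur K)"] assms unfolding cmiP_def by blast
  then show ?thesis using pur_mem[OF Q(1)] by blast
qed

lemma cmiP_disj:
  assumes "X \<in># cmiP K" "Y \<in># cmiP K - {#X#}"
  shows "X \<inter> Y = {}"
  using Pparts_disj[of X "snd (pur K)" Y] assms unfolding cmiP_def cmiI_def by blast

lemma TC_pur: "TC h (fst K) (snd K) = TC h (fst K) (snd (pur K))"
  unfolding pur_snd TC_filter_ne TC_image_cond ..

lemma filter_ne_image_filter_ne:
  assumes "f {} = {}"
  shows "filter_mset (\<lambda>A. A \<noteq> {}) (image_mset f (filter_mset (\<lambda>A. A \<noteq> {}) M)) =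
         filter_mset (\<lambda>A. A \<noteq> {}) (image_mset f M)"
  by (induction M) (auto simp: assms)

lemma T_eq:
  assumes "cmiI K' \<subseteq> I"
  shows "Pparts I (cmiP K') = filter_mset (\<lambda>A. A \<noteq> {}) (image_mset (\<lambda>Q. Q - I) (snd (pur K')))"
proof -
  have "Pparts I (cmiP K') = filter_mset (\<lambda>A. A \<noteq> {}) (image_mset (\<lambda>Q. Q - I)
      (image_mset (\<lambda>Q. Q - cmiI K') (snd (pur K'))))"
    unfolding Pparts_def cmiP_def by (rule filter_ne_image_filter_ne) simp
  also have "image_mset (\<lambda>Q. Q - I) (image_mset (\<lambda>Q. Q - cmiI K') (snd (pur K')))
      = image_mset (\<lambda>Q. Q - I) (snd (pur K'))"
  proof -
    have "\<And>Q. Q - cmiI K' - I = Q - I" using assms by auto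
    then show ?thesis by (simp add: image_mset.compositionality o_def)
  qed
  finally show ?thesis .
qed

lemma T_mem:
  assumes "X \<in># Pparts (cmiI K) (cmiP K')"
  shows "X \<noteq> {} \<and> X \<inter> fst K' = {} \<and> X \<inter> cmiI K = {} \<and> X \<inter> cmiI K' = {}"
proof -
  obtain Y where Y: "Y \<in># cmiP K'" "X = Y - cmiI K" "X \<noteq> {}"
    using Pparts_mem[OF assms] by blast
  then show ?thesis using cmiP_mem[OF Y(1)] by blast
qed

lemma repI_filter_image_empty:
  assumes "repI M \<subseteq> I"
  shows "repI (filter_mset (\<lambda>A. A \<noteq> {}) (image_mset (\<lambda>Q. Q - I) M)) = {}"
proof (rule ccontr)
  assume "repI (filter_mset (\<lambda>A. A \<noteq> {}) (image_mset (\<lambda>Q. Q - I) M)) \<noteq> {}"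
  then obtain i where "i \<in> repI (filter_mset (\<lambda>A. A \<noteq> {}) (image_mset (\<lambda>Q. Q - I) M))" by auto
  then have two: "2 \<le> size (filter_mset (\<lambda>A. i \<in> A) (filter_mset (\<lambda>A. A \<noteq> {}) (image_mset (\<lambda>Q. Q - I) M)))"
    by (rule repI_ge2)
  have e: "filter_mset (\<lambda>A. i \<in> A) (filter_mset (\<lambda>A. A \<noteq> {}) (image_mset (\<lambda>Q. Q - I) M))
     = filter_mset (\<lambda>A. i \<in> A) (image_mset (\<lambda>Q. Q - I) M)"
    unfolding filter_filter_mset by (rule filter_mset_cong0) auto
  have two': "2 \<le> size (filter_mset (\<lambda>A. i \<in> A) (image_mset (\<lambda>Q. Q - I) M))" using two e by simp
  then obtain Qa Qb R where "image_mset (\<lambda>Q. Q - I) M = add_mset Qa (add_mset Qb R)" "i \<in> Qa"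
    by (rule size_filter_ge2_obtain)
  then have "Qa \<in># image_mset (\<lambda>Q. Q - I) M" by simp
  then have iI: "i \<notin> I" using \<open>i \<in> Qa\<close> by auto
  have "size (filter_mset (\<lambda>A. i \<in> A) (image_mset (\<lambda>Q. Q - I) M)) \<le> size (filter_mset (\<lambda>Q. i \<in> Q) M)"
    by (rule size_filter_image_le) auto
  then have two'': "2 \<le> size (filter_mset (\<lambda>Q. i \<in> Q) M)" using two' by linarith
  then have "2 \<le> size M" using size_filter_mset_lesseq[of "\<lambda>Q. i \<in> Q" M] by linarith
  then have "i \<in> repI M" using two'' unfolding repI_def by simp
  then show False using assms iI by auto
qed


lemma pur_snd_sub:
  assumes "cmi_on n K" "Q \<in># snd (pur K)"
  shows "Q \<subseteq> {1..n}"
  using assms pur_mem[OF assms(2)] unfolding cmi_on_def by blast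

lemma cmiI_sub_n: "cmi_on n K \<Longrightarrow> cmiI K \<subseteq> {1..n}"
  using cmiI_sub[of K] pur_snd_sub[of n K] by blast

lemma hI_det:
  assumes h: "polymat h" and cK: "cmi_on n K" and TK: "TC h (fst K) (snd K) = 0"
  shows "h (cmiI K \<union> fst K) = h (fst K)"
proof (rule det_set[OF h])
  show "finite (cmiI K)" using cmiI_sub_n[OF cK] finite_subset by blast
next
  fix i assume i: "i \<in> cmiI K"
  have T0: "TC h (fst K) (snd (pur K)) = 0" using TK by (simp add: TC_pur)
  show "h ({i} \<union> fst K) = h (fst K)"
    using repI_det[OF h T0] repI_ge2[of i "snd (pur K)"] i unfolding cmiI_def by blast
qed

lemma TC_cmiP:
  assumes h: "polymat h" and hI: "h (cmiI K \<union> fst K) = h (fst K)"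
  shows "TC h (fst K) (snd K) = TC h (fst K) (cmiP K)"
proof -
  have "TC h (fst K) (snd K) = TC h (fst K) (snd (pur K))" by (rule TC_pur)
  also have "\<dots> = TC h (fst K - cmiI K) (image_mset (\<lambda>Q. Q - cmiI K) (snd (pur K)))"
    by (rule TC_absorb[OF h hI]) (use cmiI_disj[of K] in auto)
  also have "fst K - cmiI K = fst K" using cmiI_disj[of K] by auto
  also have "TC h (fst K) (image_mset (\<lambda>Q. Q - cmiI K) (snd (pur K))) = TC h (fst K) (cmiP K)"
    unfolding cmiP_def Pparts_def TC_filter_ne ..
  finally show ?thesis .
qed

lemma TC_K'_T:
  assumes h: "polymat h" and hI: "h (cmiI K \<union> fst K) = h (fst K)"
    and CC': "fst K \<subseteq> fst K'" and II': "cmiI K' \<subseteq> cmiI K"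
  shows "TC h (fst K') (snd K') = TC h (fst K' - cmiI K) (Pparts (cmiI K) (cmiP K'))"
proof -
  have "TC h (fst K') (snd K') = TC h (fst K') (snd (pur K'))" by (rule TC_pur)
  also have "\<dots> = TC h (fst K' - cmiI K) (image_mset (\<lambda>Q. Q - cmiI K) (snd (pur K')))"
    by (rule TC_absorb[OF h hI]) (use CC' cmiI_disj[of K] in auto)
  also have "\<dots> = TC h (fst K' - cmiI K) (Pparts (cmiI K) (cmiP K'))"
    unfolding T_eq[OF II'] TC_filter_ne ..
  finally show ?thesis .
qed

lemma T_pur:
  "snd (pur (fst K' - I, Pparts I (cmiP K'))) = Pparts I (cmiP K')"
proof -
  have a: "\<And>X. X \<in># Pparts I (cmiP K') \<Longrightarrow> X - (fst K' - I) = X \<and> X \<noteq> {}"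
  proof -
    fix X assume X: "X \<in># Pparts I (cmiP K')"
    obtain Y where Y: "Y \<in># cmiP K'" "X = Y - I" "X \<noteq> {}"
      using Pparts_mem[OF X] by blast
    then show "X - (fst K' - I) = X \<and> X \<noteq> {}" using cmiP_mem[OF Y(1)] by blast
  qed
  have "image_mset (\<lambda>Q. Q - (fst K' - I)) (Pparts I (cmiP K')) = image_mset id (Pparts I (cmiP K'))"
    using a by (intro image_mset_cong) simp
  then have "snd (pur (fst K' - I, Pparts I (cmiP K'))) = filter_mset (\<lambda>Q. Q \<noteq> {}) (Pparts I (cmiP K'))"
    unfolding pur_snd by simp
  also have "\<dots> = Pparts I (cmiP K')"
  proof -
    have "filter_mset (\<lambda>Q. Q \<noteq> {}) (Pparts I (cmiP K')) = filter_mset (\<lambda>_. True) (Pparts I (cmiP K'))"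
      by (rule filter_mset_cong0) (use a in auto)
    then show ?thesis by simp
  qed
  finally show ?thesis .
qed


lemma Rcond_D_empty:
  assumes "cmiI K' - cmiI K = {}"
  shows "Rcond K K' = (if size (Pparts (cmiI K) (cmiP K')) \<le> 1 then None
           else Some (fst K' - cmiI K, Pparts (cmiI K) (cmiP K')))"
  using assms unfolding Rcond_def Let_def by simp

lemma Rcond_D_nonempty:
  assumes "cmiI K' - cmiI K \<noteq> {}"
  shows "\<exists>K3. Rcond K K' = Some K3 \<and> 2 \<le> size (snd (pur K3)) \<and> cmiI K3 \<noteq> {}"
proof -
  define D where "D = cmiI K' - cmiI K"
  define T where "T = Pparts (cmiI K) (cmiP K')"
  define C2 where "C2 = fst K' - cmiI K"
  define X where "X = (if size T \<le> 1 then {#} else T)"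
  have DC2: "D - C2 = D" using cmiI_disj[of K'] unfolding D_def C2_def by auto
  have Dne: "D \<noteq> {}" using assms unfolding D_def .
  have R: "Rcond K K' = Some (C2, {#D, D#} + X)"
    using assms unfolding Rcond_def Let_def D_def[symmetric] T_def[symmetric] C2_def[symmetric] X_def
    by simp
  have ps: "snd (pur (C2, {#D, D#} + X)) = {#D, D#} + snd (pur (C2, X))"
    unfolding pur_snd using DC2 Dne by simp
  have s2: "2 \<le> size (snd (pur (C2, {#D, D#} + X)))" unfolding ps by simp
  have "D \<subseteq> cmiI (C2, {#D, D#} + X)"
  proof
    fix d assume d: "d \<in> D"
    have "2 \<le> size (filter_mset (\<lambda>Q. d \<in> Q) (snd (pur (C2, {#D, D#} + X))))"
      unfolding ps using d by simp
    then show "d \<in> cmiI (C2, {#D, D#} + X)"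
      unfolding cmiI_def repI_def using s2 by simp
  qed
  then have "cmiI (C2, {#D, D#} + X) \<noteq> {}" using Dne by auto
  then show ?thesis using R s2 by blast
qed

lemma canpur_None_cases:
  assumes "canpur (Rcond K K') = None"
  shows "cmiI K' \<subseteq> cmiI K \<and> size (Pparts (cmiI K) (cmiP K')) \<le> 1"
proof -
  have D: "cmiI K' - cmiI K = {}"
  proof (rule ccontr)
    assume "cmiI K' - cmiI K \<noteq> {}"
    then obtain K3 where "Rcond K K' = Some K3" "2 \<le> size (snd (pur K3))"
      using Rcond_D_nonempty by blast
    then show False using assms by (simp add: canpur_Some_None_iff)
  qed
  have "size (Pparts (cmiI K) (cmiP K')) \<le> 1"
  proof (rule ccontr)
    assume a: "\<not> size (Pparts (cmiI K) (cmiP K')) \<le> 1"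
    then have "Rcond K K' = Some (fst K' - cmiI K, Pparts (cmiI K) (cmiP K'))"
      using Rcond_D_empty[OF D] by simp
    then show False using assms a by (simp add: canpur_Some_None_iff T_pur)
  qed
  then show ?thesis using D by auto
qed

lemma iii_cases:
  assumes "Rcond K K' = Some K3" "cmiI K3 = {}"
  shows "cmiI K' \<subseteq> cmiI K \<and> K3 = (fst K' - cmiI K, Pparts (cmiI K) (cmiP K'))
      \<and> 2 \<le> size (Pparts (cmiI K) (cmiP K'))"
proof -
  have D: "cmiI K' - cmiI K = {}"
  proof (rule ccontr)
    assume "cmiI K' - cmiI K \<noteq> {}"
    then obtain K4 where "Rcond K K' = Some K4" "cmiI K4 \<noteq> {}"
      using Rcond_D_nonempty by blast
    then show False using assms by simp
  qed
  show ?thesis using Rcond_D_empty[OF D] assms(1) D by (auto split: if_splits)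
qed

lemma Pparts_empty_id:
  assumes "\<And>X. X \<in># M \<Longrightarrow> X \<noteq> {}"
  shows "Pparts {} M = M"
proof -
  have "filter_mset (\<lambda>A. A \<noteq> {}) M = filter_mset (\<lambda>_. True) M"
    by (rule filter_mset_cong0) (use assms in auto)
  then show ?thesis unfolding Pparts_def by simp
qed

lemma cmiP_K3:
  assumes "cmiI (fst K' - I, Pparts I (cmiP K')) = {}"
  shows "cmiP (fst K' - I, Pparts I (cmiP K')) = Pparts I (cmiP K')"
proof -
  have "cmiP (fst K' - I, Pparts I (cmiP K')) =
      Pparts (cmiI (fst K' - I, Pparts I (cmiP K'))) (snd (pur (fst K' - I, Pparts I (cmiP K'))))"
    by (rule cmiP_def)
  also have "\<dots> = Pparts {} (Pparts I (cmiP K'))"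
    by (simp only: assms T_pur)
  also have "\<dots> = Pparts I (cmiP K')"
    by (rule Pparts_empty_id) (use Pparts_mem in blast)
  finally show ?thesis .
qed

lemma if_dir:
  assumes h: "polymat h" and cK: "cmi_on n K" and TK: "TC h (fst K) (snd K) = 0"
    and sub: "(canpur (Rcond K K') = None \<and> fst K \<subseteq> fst K')
   \<or> (\<exists>K3. Rcond K K' = Some K3 \<and> canpur (Some K3) \<noteq> None \<and> cmiI K3 = {}
        \<and> \<Union>(set_mset (cmiP K3)) \<subseteq> \<Union>(set_mset (cmiP K))
        \<and> fst K \<subseteq> fst K3
        \<and> fst K3 \<subseteq> (fst K \<union> \<Union>(set_mset (cmiP K))) - \<Union>(set_mset (cmiP K3))
        \<and> (\<forall>A B m1 m2. A \<in># cmiP K3 \<and> B \<in># cmiP K3 - {#A#} \<and> m1 \<in> A \<and> m2 \<in> B \<longrightarrow>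
             (\<exists>X Y. X \<in># cmiP K \<and> Y \<in># cmiP K - {#X#} \<and> m1 \<in> X \<and> m2 \<in> Y)))"
  shows "TC h (fst K') (snd K') = 0"
proof -
  have hI: "h (cmiI K \<union> fst K) = h (fst K)" by (rule hI_det[OF h cK TK])
  from sub show ?thesis
  proof
    assume a: "canpur (Rcond K K') = None \<and> fst K \<subseteq> fst K'"
    then have c: "cmiI K' \<subseteq> cmiI K" "size (Pparts (cmiI K) (cmiP K')) \<le> 1"
      using canpur_None_cases by blast+
    show ?thesis using TC_K'_T[OF h hI _ c(1)] a TC_size_le1[OF c(2)] by simp
  next
    assume "\<exists>K3. Rcond K K' = Some K3 \<and> canpur (Some K3) \<noteq> None \<and> cmiI K3 = {}
        \<and> \<Union>(set_mset (cmiP K3)) \<subseteq> \<Union>(set_mset (cmiP K))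
        \<and> fst K \<subseteq> fst K3
        \<and> fst K3 \<subseteq> (fst K \<union> \<Union>(set_mset (cmiP K))) - \<Union>(set_mset (cmiP K3))
        \<and> (\<forall>A B m1 m2. A \<in># cmiP K3 \<and> B \<in># cmiP K3 - {#A#} \<and> m1 \<in> A \<and> m2 \<in> B \<longrightarrow>
             (\<exists>X Y. X \<in># cmiP K \<and> Y \<in># cmiP K - {#X#} \<and> m1 \<in> X \<and> m2 \<in> Y))"
    then obtain K3 where R: "Rcond K K' = Some K3" and I3: "cmiI K3 = {}"
      and s1: "\<Union>(set_mset (cmiP K3)) \<subseteq> \<Union>(set_mset (cmiP K))"
      and s2: "fst K \<subseteq> fst K3"
      and s3: "fst K3 \<subseteq> (fst K \<union> \<Union>(set_mset (cmiP K))) - \<Union>(set_mset (cmiP K3))"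
      and s4: "\<forall>A B m1 m2. A \<in># cmiP K3 \<and> B \<in># cmiP K3 - {#A#} \<and> m1 \<in> A \<and> m2 \<in> B \<longrightarrow>
             (\<exists>X Y. X \<in># cmiP K \<and> Y \<in># cmiP K - {#X#} \<and> m1 \<in> X \<and> m2 \<in> Y)"
      by blast
    define T where "T = Pparts (cmiI K) (cmiP K')"
    have c: "cmiI K' \<subseteq> cmiI K" and K3: "K3 = (fst K' - cmiI K, T)"
      using iii_cases[OF R I3] unfolding T_def by blast+
    have P3: "cmiP K3 = T" using cmiP_K3[of K' "cmiI K"] I3 unfolding K3 T_def by simp
    have CC': "fst K \<subseteq> fst K'" using s2 K3 by auto
    have "TC h (fst K') (snd K') = TC h (fst K' - cmiI K) T"
      unfolding T_def by (rule TC_K'_T[OF h hI CC' c])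
    also have "\<dots> = 0"
    proof (rule core_sep[OF h])
      show "TC h (fst K) (cmiP K) = 0" using TK TC_cmiP[OF h hI] by simp
      show "\<And>X Y. X \<in># cmiP K \<Longrightarrow> Y \<in># cmiP K - {#X#} \<Longrightarrow> X \<inter> Y = {}" by (rule cmiP_disj)
      show "fst K \<subseteq> fst K' - cmiI K" using s2 K3 by simp
      show "fst K' - cmiI K \<subseteq> fst K \<union> \<Union>(set_mset (cmiP K))" using s3 K3 by auto
      show "\<Union>(set_mset T) \<subseteq> \<Union>(set_mset (cmiP K))" using s1 P3 by simp
      show "\<forall>A B m1 m2. A \<in># T \<and> B \<in># T - {#A#} \<and> m1 \<in> A \<and> m2 \<in> B \<longrightarrow>
             (\<exists>X Y. X \<in># cmiP K \<and> Y \<in># cmiP K - {#X#} \<and> m1 \<in> X \<and> m2 \<in> Y)"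
        using s4 P3 by simp
    qed
    finally show ?thesis .
  qed
qed


lemma uniform_Hn:
  assumes S: "finite S" "S \<noteq> {}" and k: "\<And>\<omega>. \<omega> \<in> S \<Longrightarrow> card (S \<inter> {\<omega>'. F \<omega>' = F \<omega>}) = k"
  shows "Hn (pmf_of_set S) F = ennreal (- ln (real k / real (card S)))"
proof -
  have "Hn (pmf_of_set S) F = (\<integral>\<^sup>+\<omega>. ennreal (- ln (real k / real (card S))) \<partial>measure_pmf (pmf_of_set S))"
    unfolding Hn_def
  proof (intro nn_integral_cong_AE, unfold AE_measure_pmf_iff, intro ballI)
    fix \<omega> assume "\<omega> \<in> set_pmf (pmf_of_set S)"
    then have w: "\<omega> \<in> S" using S by simp
    have "pmf (map_pmf F (pmf_of_set S)) (F \<omega>) = real k / real (card S)"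
      unfolding pmf_map_eq using S k[OF w] by (simp add: measure_pmf_of_set)
    then show "ennreal (- ln (pmf (map_pmf F (pmf_of_set S)) (F \<omega>))) = ennreal (- ln (real k / real (card S)))"
      by simp
  qed
  also have "\<dots> = ennreal (- ln (real k / real (card S)))"
    by (simp add: measure_pmf.emeasure_space_1)
  finally show ?thesis .
qed

lemma uniform_ent:
  assumes S: "finite S" "S \<noteq> {}" and k: "\<And>\<omega>. \<omega> \<in> S \<Longrightarrow> card (S \<inter> {\<omega>'. F \<omega>' = F \<omega>}) = k"
    and kpos: "0 < k" and kle: "k \<le> card S"
  shows "ent (map_pmf F (pmf_of_set S)) = ln (real (card S) / real k)"
proof -
  have "real k / real (card S) \<le> 1" using kle kpos by simp
  moreover have "0 < real k / real (card S)" using kpos S by (simp add: card_gt_0_iff)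
  ultimately have nn: "0 \<le> - ln (real k / real (card S))" by simp
  have "ln (real k / real (card S)) = - ln (real (card S) / real k)"
    using kpos S by (simp add: ln_div card_gt_0_iff)
  moreover have "Hn (pmf_of_set S) F = ennreal (- ln (real k / real (card S)))"
    by (rule uniform_Hn[OF S k])
  ultimately show ?thesis unfolding ent_Hn using nn by simp
qed

lemma Hn_finite_support:
  assumes "finite (set_pmf p)"
  shows "Hn p F < \<infinity>"
proof -
  have "Hn p F = (\<Sum>x\<in>set_pmf p. ennreal (- ln (pmf (map_pmf F p) (F x))) * pmf p x)"
    unfolding Hn_def by (rule nn_integral_measure_pmf_finite[OF assms]) simp
  also have "\<dots> < \<infinity>"
    using assms by (simp add: ennreal_mult_less_top)
  finally show ?thesis .
qed

lemma admissible_finite: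
  assumes "finite (set_pmf P)"
  shows "admissible n P"
  unfolding admissible_def finite_ent_Hn using Hn_finite_support[OF assms] by blast


lemma sum_mset_if: "sum_mset (image_mset (\<lambda>Q. if P Q then (c::real) else 0) M) = c * real (size (filter_mset P M))"
proof (induction M)
  case empty then show ?case by simp
next
  case (add x M) then show ?case by (cases "P x") (simp_all add: distrib_left)
qed

lemma mset_ne_size1: "(X \<noteq> {#}) = (1 \<le> size X)"
  by (cases X) auto

lemma TC_indicator:
  assumes hB: "\<And>X. h (X \<union> C) - h C = (if X \<inter> B \<noteq> {} then c else 0)" and c: "0 < c"
  shows "TC h C M = 0 \<longleftrightarrow> size (filter_mset (\<lambda>Q. Q \<inter> B \<noteq> {}) M) \<le> 1"
proof -
  define s where "s = size (filter_mset (\<lambda>Q. Q \<inter> B \<noteq> {}) M)"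
  have sum: "sum_mset (image_mset (\<lambda>Q. h (Q \<union> C) - h C) M) = c * real s"
    unfolding hB s_def by (rule sum_mset_if)
  have U: "(\<Union>(set_mset M) \<inter> B \<noteq> {}) \<longleftrightarrow> 1 \<le> s"
  proof -
    have "(\<Union>(set_mset M) \<inter> B \<noteq> {}) \<longleftrightarrow> filter_mset (\<lambda>Q. Q \<inter> B \<noteq> {}) M \<noteq> {#}"
      by auto
    also have "\<dots> \<longleftrightarrow> 1 \<le> s" unfolding s_def
      unfolding mset_ne_size1 ..
    finally show ?thesis .
  qed
  have "TC h C M = c * real s - (if 1 \<le> s then c else 0)"
    unfolding TC_def sum using hB[of "\<Union>(set_mset M)"] U by simp
  then show ?thesis unfolding s_def[symmetric] using c
    by (cases "s = 0"; cases "s = 1") (auto simp: algebra_simps)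
qed

definition PB :: "nat set \<Rightarrow> (nat \<Rightarrow> nat) pmf" where
  "PB B = map_pmf (\<lambda>b::bool. (\<lambda>i. if i \<in> B \<and> b then 1 else 0)) (pmf_of_set UNIV)"

lemma admissible_PB: "admissible n (PB B)"
  by (rule admissible_finite) (simp add: PB_def)

lemma hP_PB: "hP (PB B) A = (if A \<inter> B \<noteq> {} then ln 2 else 0)"
proof -
  define f where "f = (\<lambda>b::bool. (\<lambda>i::nat. if i \<in> B \<and> b then (1::nat) else 0))"
  have e: "hP (PB B) A = ent (map_pmf (rv A \<circ> f) (pmf_of_set UNIV))"
    unfolding hP_def PB_def f_def by (simp add: map_pmf_comp o_def)
  show ?thesis
  proof (cases "A \<inter> B \<noteq> {}")
    case True
    then obtain i where i: "i \<in> A" "i \<in> B" by auto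
    have "\<And>b b'. (rv A \<circ> f) b' = (rv A \<circ> f) b \<longleftrightarrow> b' = b"
    proof -
      fix b b'
      show "(rv A \<circ> f) b' = (rv A \<circ> f) b \<longleftrightarrow> b' = b"
      proof
        assume "(rv A \<circ> f) b' = (rv A \<circ> f) b"
        then have "rv A (f b') i = rv A (f b) i" by simp
        then show "b' = b" using i unfolding rv_def f_def by (cases b; cases b') auto
      qed simp
    qed
    then have "\<And>b. UNIV \<inter> {b'. (rv A \<circ> f) b' = (rv A \<circ> f) b} = {b}" by auto
    then have "ent (map_pmf (rv A \<circ> f) (pmf_of_set UNIV)) = ln (real (card (UNIV :: bool set)) / real 1)"
      by (intro uniform_ent) auto
    then show ?thesis using e True by simp
  next
    case False
    have "\<And>b b'. (rv A \<circ> f) b' = (rv A \<circ> f) b"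
      using False unfolding rv_def f_def fun_eq_iff by auto
    then have "\<And>b. UNIV \<inter> {b'. (rv A \<circ> f) b' = (rv A \<circ> f) b} = UNIV" by auto
    then have "ent (map_pmf (rv A \<circ> f) (pmf_of_set UNIV)) = ln (real (card (UNIV :: bool set)) / real (card (UNIV :: bool set)))"
      by (intro uniform_ent) auto
    then show ?thesis using e False by simp
  qed
qed

lemma valid_PB:
  "valid (PB B) K \<longleftrightarrow> (B \<inter> fst K \<noteq> {} \<or> size (filter_mset (\<lambda>Q. Q \<inter> B \<noteq> {}) (snd K)) \<le> 1)"
proof (cases "B \<inter> fst K \<noteq> {}")
  case True
  have "TC (hP (PB B)) (fst K) (snd K) = 0 \<longleftrightarrow> size (filter_mset (\<lambda>Q. Q \<inter> {} \<noteq> {}) (snd K)) \<le> 1"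
    by (rule TC_indicator[where c = "ln 2"]) (use True in \<open>auto simp: hP_PB\<close>)
  then show ?thesis using True by (simp add: valid_TC)
next
  case False
  have "TC (hP (PB B)) (fst K) (snd K) = 0 \<longleftrightarrow> size (filter_mset (\<lambda>Q. Q \<inter> B \<noteq> {}) (snd K)) \<le> 1"
    by (rule TC_indicator[where c = "ln 2"]) (use False in \<open>auto simp: hP_PB\<close>)
  then show ?thesis using False by (simp add: valid_TC)
qed


lemma UNIV_bool2: "(UNIV :: (bool \<times> bool) set) = {(True,True),(True,False),(False,True),(False,False)}"
  by (auto simp: UNIV_bool)

lemma fibre_card0:
  fixes a b :: bool
  shows "card (UNIV \<inter> {\<omega>'. (a1 \<longrightarrow> a = fst \<omega>') \<and> (a2 \<longrightarrow> b = snd \<omega>') \<and>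
      (a3 \<longrightarrow> (a \<noteq> b) = (fst \<omega>' \<noteq> snd \<omega>'))}) =
    (if of_bool a1 + of_bool a2 + of_bool a3 = (0::nat) then 4
     else if of_bool a1 + of_bool a2 + of_bool a3 = (1::nat) then 2 else 1)"
  unfolding UNIV_bool2
  by (cases a; cases b; cases a1; cases a2; cases a3) (simp_all add: Int_insert_left)

lemma fibre_card:
  fixes \<omega> :: "bool \<times> bool"
  shows "card (UNIV \<inter> {\<omega>'. (a1 \<longrightarrow> fst \<omega> = fst \<omega>') \<and> (a2 \<longrightarrow> snd \<omega> = snd \<omega>') \<and>
      (a3 \<longrightarrow> (fst \<omega> \<noteq> snd \<omega>) = (fst \<omega>' \<noteq> snd \<omega>'))}) =
    (if of_bool a1 + of_bool a2 + of_bool a3 = (0::nat) then 4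
     else if of_bool a1 + of_bool a2 + of_bool a3 = (1::nat) then 2 else 1)"
  using fibre_card0[of a1 "fst \<omega>" a2 "snd \<omega>" a3] by simp

definition gX :: "nat \<Rightarrow> nat \<Rightarrow> nat \<Rightarrow> bool \<times> bool \<Rightarrow> nat \<Rightarrow> nat" where
  "gX m1 m2 c \<omega> = (\<lambda>i. if i = m1 then of_bool (fst \<omega>) else if i = m2 then of_bool (snd \<omega>)
      else if i = c then of_bool (fst \<omega> \<noteq> snd \<omega>) else 0)"

definition PX :: "nat \<Rightarrow> nat \<Rightarrow> nat \<Rightarrow> (nat \<Rightarrow> nat) pmf" where
  "PX m1 m2 c = map_pmf (gX m1 m2 c) (pmf_of_set UNIV)"

lemma admissible_PX: "admissible n (PX m1 m2 c)"
  by (rule admissible_finite) (simp add: PX_def)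

definition cntX :: "nat \<Rightarrow> nat \<Rightarrow> nat \<Rightarrow> nat set \<Rightarrow> nat" where
  "cntX m1 m2 c A = of_bool (m1 \<in> A) + of_bool (m2 \<in> A) + of_bool (c \<in> A)"

lemma rv_gX_eq:
  assumes d: "m1 \<noteq> m2" "m1 \<noteq> c" "m2 \<noteq> c"
  shows "rv A (gX m1 m2 c \<omega>') = rv A (gX m1 m2 c \<omega>) \<longleftrightarrow>
    ((m1 \<in> A \<longrightarrow> fst \<omega> = fst \<omega>') \<and> (m2 \<in> A \<longrightarrow> snd \<omega> = snd \<omega>') \<and>
     (c \<in> A \<longrightarrow> (fst \<omega> \<noteq> snd \<omega>) = (fst \<omega>' \<noteq> snd \<omega>')))"
proof -
  have "rv A (gX m1 m2 c \<omega>') = rv A (gX m1 m2 c \<omega>) \<longleftrightarrow> (\<forall>i\<in>A. gX m1 m2 c \<omega>' i = gX m1 m2 c \<omega> i)"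
    by (rule rv_eq_iff)
  also have "\<dots> \<longleftrightarrow> ((m1 \<in> A \<longrightarrow> fst \<omega> = fst \<omega>') \<and> (m2 \<in> A \<longrightarrow> snd \<omega> = snd \<omega>') \<and>
     (c \<in> A \<longrightarrow> (fst \<omega> \<noteq> snd \<omega>) = (fst \<omega>' \<noteq> snd \<omega>')))"
    unfolding gX_def using d by (auto split: if_splits)
  finally show ?thesis .
qed

lemma hP_PX:
  assumes d: "m1 \<noteq> m2" "m1 \<noteq> c" "m2 \<noteq> c"
  shows "hP (PX m1 m2 c) A = (if cntX m1 m2 c A = 0 then 0 else if cntX m1 m2 c A = 1 then ln 2 else 2 * ln 2)"
proof -
  define k where "k = (if cntX m1 m2 c A = 0 then 4 else if cntX m1 m2 c A = 1 then 2 else (1::nat))"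
  have e: "hP (PX m1 m2 c) A = ent (map_pmf (rv A \<circ> gX m1 m2 c) (pmf_of_set UNIV))"
    unfolding hP_def PX_def by (simp add: map_pmf_comp o_def)
  have fib: "\<And>\<omega>. card (UNIV \<inter> {\<omega>'. (rv A \<circ> gX m1 m2 c) \<omega>' = (rv A \<circ> gX m1 m2 c) \<omega>}) = k"
    unfolding o_def rv_gX_eq[OF d] k_def cntX_def by (rule fibre_card)
  have c4: "card (UNIV :: (bool \<times> bool) set) = 4" unfolding UNIV_bool2 by simp
  have "ent (map_pmf (rv A \<circ> gX m1 m2 c) (pmf_of_set UNIV)) = ln (real (card (UNIV :: (bool \<times> bool) set)) / real k)"
    by (rule uniform_ent) (use fib c4 in \<open>auto simp: k_def\<close>)
  also have "\<dots> = (if cntX m1 m2 c A = 0 then 0 else if cntX m1 m2 c A = 1 then ln 2 else 2 * ln 2)"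
  proof -
    have "ln (4::real) = 2 * ln 2"
      using ln_realpow[of 2 2] by simp
    then show ?thesis unfolding c4 k_def by simp
  qed
  finally show ?thesis using e by simp
qed


lemma TC_PX_K:
  assumes d: "m1 \<noteq> m2" "m1 \<noteq> c" "m2 \<noteq> c"
    and C: "m1 \<notin> C" "m2 \<notin> C" "c \<notin> C"
    and Mc: "\<forall>Q\<in>#M. c \<notin> Q" and M12: "\<forall>Q\<in>#M. \<not> (m1 \<in> Q \<and> m2 \<in> Q)"
    and s1: "size (filter_mset (\<lambda>Q. m1 \<in> Q) M) = 1" and s2: "size (filter_mset (\<lambda>Q. m2 \<in> Q) M) = 1"
  shows "TC (hP (PX m1 m2 c)) C M = 0"
proof -
  define h where "h = hP (PX m1 m2 c)"
  have hC: "h C = 0" unfolding h_def hP_PX[OF d] cntX_def using C by simp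
  have hQ: "h (Q \<union> C) - h C = (if m1 \<in> Q then ln 2 else 0) + (if m2 \<in> Q then ln 2 else 0)"
    if "Q \<in># M" for Q
    using Mc M12 that C hC unfolding h_def hP_PX[OF d] cntX_def by auto
  have "sum_mset (image_mset (\<lambda>Q. h (Q \<union> C) - h C) M)
      = sum_mset (image_mset (\<lambda>Q. (if m1 \<in> Q then ln 2 else 0) + (if m2 \<in> Q then ln 2 else 0)) M)"
    using hQ by (intro arg_cong[where f=sum_mset] image_mset_cong) auto
  also have "\<dots> = sum_mset (image_mset (\<lambda>Q. if m1 \<in> Q then ln 2 else 0) M)
      + sum_mset (image_mset (\<lambda>Q. if m2 \<in> Q then ln 2 else 0) M)"
    by (rule sum_mset.distrib)
  also have "\<dots> = 2 * ln 2" unfolding sum_mset_if s1 s2 by simp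
  finally have sum: "sum_mset (image_mset (\<lambda>Q. h (Q \<union> C) - h C) M) = 2 * ln 2" .
  have m1U: "m1 \<in> \<Union>(set_mset M)"
  proof -
    have "filter_mset (\<lambda>Q. m1 \<in> Q) M \<noteq> {#}" unfolding mset_ne_size1 using s1 by simp
    then obtain Q where "Q \<in># filter_mset (\<lambda>Q. m1 \<in> Q) M" by (rule multiset_nonemptyE)
    then show ?thesis by auto
  qed
  have m2U: "m2 \<in> \<Union>(set_mset M)"
  proof -
    have "filter_mset (\<lambda>Q. m2 \<in> Q) M \<noteq> {#}" unfolding mset_ne_size1 using s2 by simp
    then obtain Q where "Q \<in># filter_mset (\<lambda>Q. m2 \<in> Q) M" by (rule multiset_nonemptyE)
    then show ?thesis by auto
  qed
  have cU: "c \<notin> \<Union>(set_mset M)" using Mc by auto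
  have hU: "h (\<Union>(set_mset M) \<union> C) = 2 * ln 2"
    unfolding h_def hP_PX[OF d] cntX_def using m1U m2U cU C by simp
  have "TC h C M = 0" unfolding TC_def using sum hU hC by linarith
  then show ?thesis unfolding h_def by simp
qed

lemma valid_PX_K':
  assumes d: "m1 \<noteq> m2" "m1 \<noteq> c" "m2 \<noteq> c"
    and C: "m1 \<notin> C" "m2 \<notin> C" "c \<in> C"
  shows "TC (hP (PX m1 m2 c)) C M = 0 \<longleftrightarrow> size (filter_mset (\<lambda>Q. Q \<inter> {m1, m2} \<noteq> {}) M) \<le> 1"
proof (rule TC_indicator[where c = "ln 2"])
  fix X
  show "hP (PX m1 m2 c) (X \<union> C) - hP (PX m1 m2 c) C = (if X \<inter> {m1, m2} \<noteq> {} then ln 2 else 0)"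
    unfolding hP_PX[OF d] cntX_def using C by auto
qed simp


lemma two_in_filter:
  assumes X: "X \<in># M" and Y: "Y \<in># M - {#X#}" and P: "P X" "P Y"
  shows "2 \<le> size (filter_mset P M)"
proof -
  have sub: "{#X, Y#} \<subseteq># M" using X Y
    by (metis add_mset_add_single insert_DiffM mset_subset_eq_mono_add_right_cancel single_subset_iff subset_mset.add_diff_inverse subset_mset.le_add_same_cancel1 union_commute)
  have "size (filter_mset P {#X, Y#}) \<le> size (filter_mset P M)"
    by (intro size_mset_mono multiset_filter_mono sub)
  then show ?thesis using P by simp
qed

lemma size_filter_image: "size (filter_mset P (image_mset f M)) = size (filter_mset (\<lambda>x. P (f x)) M)"
  by (induction M) auto

lemma count_meets_pur:
  assumes "B \<inter> fst K = {}"
  shows "size (filter_mset (\<lambda>Q. Q \<inter> B \<noteq> {}) (snd (pur K))) = size (filter_mset (\<lambda>Q. Q \<inter> B \<noteq> {}) (snd K))"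
proof -
  have "filter_mset (\<lambda>Q. Q \<inter> B \<noteq> {}) (snd (pur K)) = filter_mset (\<lambda>Q. Q \<inter> B \<noteq> {}) (image_mset (\<lambda>Q. Q - fst K) (snd K))"
    unfolding pur_snd filter_filter_mset by (rule filter_mset_cong0) auto
  then have "size (filter_mset (\<lambda>Q. Q \<inter> B \<noteq> {}) (snd (pur K))) = size (filter_mset (\<lambda>Q. (Q - fst K) \<inter> B \<noteq> {}) (snd K))"
    by (simp add: size_filter_image)
  also have "filter_mset (\<lambda>Q. (Q - fst K) \<inter> B \<noteq> {}) (snd K) = filter_mset (\<lambda>Q. Q \<inter> B \<noteq> {}) (snd K)"
    using assms by (intro filter_mset_cong0) auto
  finally show ?thesis by simp
qed

lemma notin_repI_le1:
  assumes "i \<notin> repI M"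
  shows "size (filter_mset (\<lambda>Q. i \<in> Q) M) \<le> 1"
proof (cases "2 \<le> size M")
  case True then show ?thesis using assms unfolding repI_def by simp
next
  case False then show ?thesis using size_filter_mset_lesseq[of "\<lambda>Q. i \<in> Q" M] by linarith
qed

lemma pur_minus_in_cmiP:
  assumes "Q \<in># snd (pur K)" "Q - cmiI K \<noteq> {}"
  shows "Q - cmiI K \<in># cmiP K"
  using assms unfolding cmiP_def Pparts_def by auto

lemma pur_sub_I_Ps:
  assumes "Q \<in># snd (pur K)"
  shows "Q \<subseteq> cmiI K \<union> \<Union>(set_mset (cmiP K))"
proof
  fix x assume x: "x \<in> Q"
  show "x \<in> cmiI K \<union> \<Union>(set_mset (cmiP K))"
  proof (cases "x \<in> cmiI K")
    case False
    then have "Q - cmiI K \<in># cmiP K" using x assms by (intro pur_minus_in_cmiP) auto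
    then show ?thesis using x False by blast
  qed simp
qed

lemma T_two_meets:
  assumes II': "cmiI K' \<subseteq> cmiI K"
    and t: "t \<in># Pparts (cmiI K) (cmiP K')" and t2: "t2 \<in># Pparts (cmiI K) (cmiP K') - {#t#}"
    and m: "t \<inter> B \<noteq> {}" "t2 \<inter> B \<noteq> {}"
  shows "2 \<le> size (filter_mset (\<lambda>Q. Q \<inter> B \<noteq> {}) (snd (pur K')))"
proof -
  have "2 \<le> size (filter_mset (\<lambda>Q. Q \<inter> B \<noteq> {}) (Pparts (cmiI K) (cmiP K')))"
    by (rule two_in_filter[OF t t2]) (use m in auto)
  also have "filter_mset (\<lambda>Q. Q \<inter> B \<noteq> {}) (Pparts (cmiI K) (cmiP K'))
      = filter_mset (\<lambda>Q. Q \<inter> B \<noteq> {}) (image_mset (\<lambda>Q. Q - cmiI K) (snd (pur K')))"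
    unfolding T_eq[OF II'] filter_filter_mset by (rule filter_mset_cong0) auto
  also have "size \<dots> \<le> size (filter_mset (\<lambda>Q. Q \<inter> B \<noteq> {}) (snd (pur K')))"
    by (rule size_filter_image_le) auto
  finally show ?thesis .
qed

lemma size2_obtain:
  assumes "2 \<le> size M"
  obtains X Y where "X \<in># M" "Y \<in># M - {#X#}"
proof -
  have "2 \<le> size (filter_mset (\<lambda>_. True) M)" using assms by simp
  then obtain X Y R where "M = add_mset X (add_mset Y R)" by (rule size_filter_ge2_obtain)
  then show ?thesis using that[of X Y] by simp
qed

lemma nondeg_size:
  assumes "\<not> degenerate n K'"
  shows "2 \<le> size (snd (pur K'))"
proof (rule ccontr)
  assume "\<not> 2 \<le> size (snd (pur K'))"
  then have "size (snd (pur K')) \<le> 1" by simp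
  then have "\<And>P. valid P K'" unfolding valid_TC using TC_pur TC_size_le1 by metis
  then show False using assms unfolding degenerate_def by blast
qed


lemma case_notCC:
  assumes cK: "cmi_on n K" and cK': "cmi_on n K'" and s2: "2 \<le> size (snd (pur K'))"
    and nCC: "\<not> fst K \<subseteq> fst K'"
  shows "valid (PB ({1..n} - fst K')) K \<and> \<not> valid (PB ({1..n} - fst K')) K'"
proof
  define B where "B = {1..n} - fst K'"
  have "B \<inter> fst K \<noteq> {}" using nCC cK unfolding B_def cmi_on_def by auto
  then show "valid (PB ({1..n} - fst K')) K" unfolding B_def[symmetric] valid_PB by simp
  have BK': "B \<inter> fst K' = {}" unfolding B_def by auto
  have "filter_mset (\<lambda>Q. Q \<inter> B \<noteq> {}) (snd (pur K')) = filter_mset (\<lambda>_. True) (snd (pur K'))"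
  proof (rule filter_mset_cong0)
    fix Q assume Q: "Q \<in># snd (pur K')"
    have "Q \<subseteq> {1..n}" by (rule pur_snd_sub[OF cK' Q])
    then show "(Q \<inter> B \<noteq> {}) = True" using pur_mem[OF Q] unfolding B_def by auto
  qed
  then have "2 \<le> size (filter_mset (\<lambda>Q. Q \<inter> B \<noteq> {}) (snd K'))"
    using s2 count_meets_pur[OF BK'] by simp
  then show "\<not> valid (PB ({1..n} - fst K')) K'" unfolding B_def[symmetric] valid_PB using BK' by simp
qed

lemma case_D:
  assumes D: "cmiI K' - cmiI K \<noteq> {}"
  shows "\<exists>B. valid (PB B) K \<and> \<not> valid (PB B) K'"
proof -
  obtain d where d: "d \<in> cmiI K'" "d \<notin> cmiI K" using D by auto
  have e: "\<And>M. filter_mset (\<lambda>Q. Q \<inter> {d} \<noteq> {}) M = filter_mset (\<lambda>Q. d \<in> Q) M"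
    by (rule filter_mset_cong0) auto
  have vK: "valid (PB {d}) K"
  proof (cases "d \<in> fst K")
    case True then show ?thesis unfolding valid_PB by auto
  next
    case False
    then have dK: "{d} \<inter> fst K = {}" by auto
    have "size (filter_mset (\<lambda>Q. d \<in> Q) (snd (pur K))) \<le> 1"
      using d(2) unfolding cmiI_def by (rule notin_repI_le1)
    then show ?thesis unfolding valid_PB using count_meets_pur[OF dK] e by simp
  qed
  have dK': "{d} \<inter> fst K' = {}" using d(1) cmiI_disj[of K'] by auto
  have "2 \<le> size (filter_mset (\<lambda>Q. d \<in> Q) (snd (pur K')))"
    using d(1) unfolding cmiI_def by (rule repI_ge2)
  then have "\<not> valid (PB {d}) K'" unfolding valid_PB using count_meets_pur[OF dK'] e dK' by simp
  then show ?thesis using vK by blast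
qed

lemma T_other:
  assumes "t \<in># M" "2 \<le> size M" "\<And>X. X \<in># M \<Longrightarrow> X \<noteq> {}"
  obtains t2 m2 where "t2 \<in># M - {#t#}" "m2 \<in> t2"
proof -
  have "size (M - {#t#}) \<ge> 1" using assms(1,2) by (simp add: size_Diff_submset)
  then have "M - {#t#} \<noteq> {#}" unfolding mset_ne_size1 .
  then obtain t2 where t2: "t2 \<in># M - {#t#}" by (rule multiset_nonemptyE)
  then have "t2 \<in># M" by (meson in_diffD)
  then obtain m2 where "m2 \<in> t2" using assms(3) by blast
  then show ?thesis using that t2 by blast
qed

lemma T_mem_ne: "X \<in># Pparts (cmiI K) (cmiP K') \<Longrightarrow> X \<noteq> {}"
  using T_mem by blast

lemma case_b1:
  assumes II': "cmiI K' \<subseteq> cmiI K"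
    and sT: "2 \<le> size (Pparts (cmiI K) (cmiP K'))"
    and t: "t \<in># Pparts (cmiI K) (cmiP K')" and m: "m \<in> t" "m \<notin> \<Union>(set_mset (cmiP K))"
  shows "\<exists>B. valid (PB B) K \<and> \<not> valid (PB B) K'"
proof -
  define T where "T = Pparts (cmiI K) (cmiP K')"
  obtain t2 m2 where t2: "t2 \<in># T - {#t#}" "m2 \<in> t2"
    using T_other[of t T] t sT T_mem_ne unfolding T_def by blast
  have t2T: "t2 \<in># T" using t2(1) by (meson in_diffD)
  have tm: "t \<inter> fst K' = {}" "t \<inter> cmiI K = {}" using T_mem[of t] t by auto
  have t2m: "t2 \<inter> fst K' = {}" "t2 \<inter> cmiI K = {}" using T_mem[of t2] t2T unfolding T_def by auto
  define B where "B = {m, m2}"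
  have BK': "B \<inter> fst K' = {}" using tm t2m m t2 unfolding B_def by auto
  have vK: "valid (PB B) K"
  proof (cases "B \<inter> fst K = {}")
    case False then show ?thesis unfolding valid_PB by auto
  next
    case BK: True
    have "filter_mset (\<lambda>Q. Q \<inter> B \<noteq> {}) (snd (pur K)) = filter_mset (\<lambda>Q. m2 \<in> Q) (snd (pur K))"
    proof (rule filter_mset_cong0)
      fix Q assume Q: "Q \<in># snd (pur K)"
      have "m \<notin> Q" using pur_sub_I_Ps[OF Q] m tm by blast
      then show "(Q \<inter> B \<noteq> {}) = (m2 \<in> Q)" unfolding B_def by auto
    qed
    moreover have "size (filter_mset (\<lambda>Q. m2 \<in> Q) (snd (pur K))) \<le> 1"
      using t2 t2m unfolding cmiI_def by (intro notin_repI_le1) auto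
    ultimately show ?thesis unfolding valid_PB using count_meets_pur[OF BK] by simp
  qed
  have "2 \<le> size (filter_mset (\<lambda>Q. Q \<inter> B \<noteq> {}) (snd (pur K')))"
  proof (rule T_two_meets[OF II' t])
    show "t2 \<in># Pparts (cmiI K) (cmiP K') - {#t#}" using t2(1) unfolding T_def by simp
    show "t \<inter> B \<noteq> {}" "t2 \<inter> B \<noteq> {}" using m t2 unfolding B_def by auto
  qed
  then have "\<not> valid (PB B) K'" unfolding valid_PB using count_meets_pur[OF BK'] BK' by simp
  then show ?thesis using vK by blast
qed
lemma two_notin_repI:
  assumes "i \<notin> repI M" "Qa \<in># M" "Qb \<in># M - {#Qa#}" "i \<in> Qa" "i \<in> Qb"
  shows False
proof -
  have "2 \<le> size (filter_mset (\<lambda>Q. i \<in> Q) M)" using two_in_filter[of Qa M Qb] assms(2-5) by simp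
  then show False using notin_repI_le1[OF assms(1)] by linarith
qed

lemma case_b4:
  assumes II': "cmiI K' \<subseteq> cmiI K"
    and A: "A \<in># Pparts (cmiI K) (cmiP K')" and B': "B' \<in># Pparts (cmiI K) (cmiP K') - {#A#}"
    and m: "m1 \<in> A" "m2 \<in> B'"
    and nsep: "\<not> (\<exists>X Y. X \<in># cmiP K \<and> Y \<in># cmiP K - {#X#} \<and> m1 \<in> X \<and> m2 \<in> Y)"
  shows "\<exists>B. valid (PB B) K \<and> \<not> valid (PB B) K'"
proof -
  define T where "T = Pparts (cmiI K) (cmiP K')"
  have B'T: "B' \<in># T" using B' unfolding T_def by (meson in_diffD)
  have Am: "A \<inter> fst K' = {}" "A \<inter> cmiI K = {}" using T_mem[of A] A by auto
  have Bm: "B' \<inter> fst K' = {}" "B' \<inter> cmiI K = {}" using T_mem[of B'] B'T unfolding T_def by auto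
  define B where "B = {m1, m2}"
  have BK': "B \<inter> fst K' = {}" using Am Bm m unfolding B_def by auto
  have mI: "m1 \<notin> cmiI K" "m2 \<notin> cmiI K" using Am Bm m by auto
  have vK: "valid (PB B) K"
  proof (cases "B \<inter> fst K = {}")
    case False then show ?thesis unfolding valid_PB by auto
  next
    case BK: True
    have "size (filter_mset (\<lambda>Q. Q \<inter> B \<noteq> {}) (snd (pur K))) \<le> 1"
    proof (rule ccontr)
      assume "\<not> size (filter_mset (\<lambda>Q. Q \<inter> B \<noteq> {}) (snd (pur K))) \<le> 1"
      then have "2 \<le> size (filter_mset (\<lambda>Q. Q \<inter> B \<noteq> {}) (snd (pur K)))" by simp
      then obtain Qa Qb R where Mp: "snd (pur K) = add_mset Qa (add_mset Qb R)"
        and Qa: "Qa \<inter> B \<noteq> {}" and Qb: "Qb \<inter> B \<noteq> {}"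
        by (rule size_filter_ge2_obtain)
      have Qa_in: "Qa \<in># snd (pur K)" and Qb_in: "Qb \<in># snd (pur K) - {#Qa#}" using Mp by auto
      have n1: "\<not> (m1 \<in> Qa \<and> m1 \<in> Qb)"
        using two_notin_repI[of m1 "snd (pur K)" Qa Qb] mI Qa_in Qb_in unfolding cmiI_def by blast
      have n2: "\<not> (m2 \<in> Qa \<and> m2 \<in> Qb)"
        using two_notin_repI[of m2 "snd (pur K)" Qa Qb] mI Qa_in Qb_in unfolding cmiI_def by blast
      have cases: "(m1 \<in> Qa \<and> m2 \<in> Qb) \<or> (m2 \<in> Qa \<and> m1 \<in> Qb)"
        using Qa Qb n1 n2 unfolding B_def by auto
      define Xa where "Xa = Qa - cmiI K"
      define Xb where "Xb = Qb - cmiI K"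
      have neab: "Xa \<noteq> {}" "Xb \<noteq> {}" using cases mI unfolding Xa_def Xb_def by auto
      have Ps: "cmiP K = add_mset Xa (add_mset Xb (Pparts (cmiI K) R))"
        unfolding cmiP_def Mp Pparts_def using neab unfolding Xa_def Xb_def by simp
      have "Xa \<in># cmiP K" "Xb \<in># cmiP K - {#Xa#}" "Xb \<in># cmiP K" "Xa \<in># cmiP K - {#Xb#}"
        unfolding Ps by auto
      then show False using nsep cases mI unfolding Xa_def Xb_def by blast
    qed
    then show ?thesis unfolding valid_PB using count_meets_pur[OF BK] by simp
  qed
  have "2 \<le> size (filter_mset (\<lambda>Q. Q \<inter> B \<noteq> {}) (snd (pur K')))"
  proof (rule T_two_meets[OF II' A B'])
    show "A \<inter> B \<noteq> {}" "B' \<inter> B \<noteq> {}" using m unfolding B_def by auto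
  qed
  then have "\<not> valid (PB B) K'" unfolding valid_PB using count_meets_pur[OF BK'] BK' by simp
  then show ?thesis using vK by blast
qed

lemma disj_same:
  assumes disj: "\<And>X Y. X \<in># Ps \<Longrightarrow> Y \<in># Ps - {#X#} \<Longrightarrow> X \<inter> Y = {}"
    and X: "X \<in># Ps" and Z: "Z \<in># Ps" and x: "x \<in> X" "x \<in> Z"
  shows "X = Z"
proof (rule ccontr)
  assume "X \<noteq> Z"
  then have "Z \<in># Ps - {#X#}" using Z by (simp add: in_diff_count)
  then show False using disj[OF X] x by blast
qed

lemma size_ge1_obtain: "1 \<le> size (filter_mset P M) \<Longrightarrow> \<exists>x. x \<in># M \<and> P x"
  by (metis mset_ne_size1 multiset_nonemptyE mem_Collect_eq set_mset_filter)

lemma case_b3: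
  assumes II': "cmiI K' \<subseteq> cmiI K"
    and t1: "t1 \<in># Pparts (cmiI K) (cmiP K')" and t2: "t2 \<in># Pparts (cmiI K) (cmiP K') - {#t1#}"
    and m: "m1 \<in> t1" "m2 \<in> t2"
    and X: "X \<in># cmiP K" and Y: "Y \<in># cmiP K - {#X#}" and mXY: "m1 \<in> X" "m2 \<in> Y"
    and c: "c \<in> fst K' - cmiI K" "c \<notin> fst K" "c \<notin> \<Union>(set_mset (cmiP K))"
  shows "\<exists>P. admissible n P \<and> valid P K \<and> \<not> valid P K'"
proof -
  have YP: "Y \<in># cmiP K" using Y by (meson in_diffD)
  have d: "m1 \<noteq> m2" "m1 \<noteq> c" "m2 \<noteq> c"
    using cmiP_disj[OF X Y] mXY c X YP by auto
  have t2T: "t2 \<in># Pparts (cmiI K) (cmiP K')" using t2 by (meson in_diffD)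
  have mK': "m1 \<notin> fst K'" "m2 \<notin> fst K'" using T_mem[OF t1] T_mem[OF t2T] m by auto
  have mK: "m1 \<notin> fst K" "m2 \<notin> fst K" "m1 \<notin> cmiI K" "m2 \<notin> cmiI K"
    using cmiP_mem[OF X] cmiP_mem[OF YP] mXY by auto
  define Mp where "Mp = snd (pur K)"
  have Mc: "\<forall>Q\<in>#Mp. c \<notin> Q" using pur_sub_I_Ps c unfolding Mp_def by blast
  have M12: "\<forall>Q\<in>#Mp. \<not> (m1 \<in> Q \<and> m2 \<in> Q)"
  proof (intro ballI notI)
    fix Q assume Q: "Q \<in># Mp" and mQ: "m1 \<in> Q \<and> m2 \<in> Q"
    have Z: "Q - cmiI K \<in># cmiP K" using Q mQ mK unfolding Mp_def by (intro pur_minus_in_cmiP) auto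
    have dj: "\<And>X Y. X \<in># cmiP K \<Longrightarrow> Y \<in># cmiP K - {#X#} \<Longrightarrow> X \<inter> Y = {}" by (rule cmiP_disj)
    have "X = Q - cmiI K" using disj_same[OF dj X Z, of m1] mXY mQ mK by auto
    moreover have "Y = Q - cmiI K" using disj_same[OF dj YP Z, of m2] mXY mQ mK by auto
    ultimately have "X = Y" by simp
    then have "X \<inter> X = {}" using cmiP_disj[OF X Y] by simp
    then show False using mXY by auto
  qed
  have sm: "size (filter_mset (\<lambda>Q. mi \<in> Q) Mp) = 1"
    if mi: "mi \<notin> cmiI K" "mi \<in> Z" "Z \<in># cmiP K" for mi Z
  proof -
    have le: "size (filter_mset (\<lambda>Q. mi \<in> Q) Mp) \<le> 1"
      using mi(1) unfolding Mp_def cmiI_def by (rule notin_repI_le1)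
    obtain Q where Q: "Q \<in># Mp" "Z = Q - cmiI K" using cmiP_mem[OF mi(3)] unfolding Mp_def by blast
    have "mi \<in> Q" using Q mi by auto
    then have "filter_mset (\<lambda>Q. mi \<in> Q) Mp \<noteq> {#}" using Q(1) by auto
    then have "1 \<le> size (filter_mset (\<lambda>Q. mi \<in> Q) Mp)" unfolding mset_ne_size1 .
    then show ?thesis using le by simp
  qed
  have s1: "size (filter_mset (\<lambda>Q. m1 \<in> Q) Mp) = 1" using sm[OF mK(3) mXY(1) X] .
  have s2: "size (filter_mset (\<lambda>Q. m2 \<in> Q) Mp) = 1" using sm[OF mK(4) mXY(2) YP] .
  have "TC (hP (PX m1 m2 c)) (fst K) Mp = 0"
    by (rule TC_PX_K[OF d mK(1) mK(2) c(2) Mc M12 s1 s2])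
  then have vK: "valid (PX m1 m2 c) K" unfolding valid_TC Mp_def using TC_pur by metis
  have BK': "{m1, m2} \<inter> fst K' = {}" using mK' by auto
  have "2 \<le> size (filter_mset (\<lambda>Q. Q \<inter> {m1, m2} \<noteq> {}) (snd (pur K')))"
  proof (rule T_two_meets[OF II' t1 t2])
    show "t1 \<inter> {m1, m2} \<noteq> {}" "t2 \<inter> {m1, m2} \<noteq> {}" using m by auto
  qed
  then have "2 \<le> size (filter_mset (\<lambda>Q. Q \<inter> {m1, m2} \<noteq> {}) (snd K'))"
    using count_meets_pur[OF BK'] by simp
  then have "\<not> valid (PX m1 m2 c) K'"
  proof -
    have cK': "c \<in> fst K'" using c(1) by simp
    show ?thesis unfolding valid_TC using valid_PX_K'[OF d mK'(1) mK'(2) cK', of "snd K'"] \<open>2 \<le> size (filter_mset (\<lambda>Q. Q \<inter> {m1, m2} \<noteq> {}) (snd K'))\<close> by linarith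
  qed
  then show ?thesis using vK admissible_PX by blast
qed


lemma TC_cong_sub:
  assumes h: "\<And>A. A \<subseteq> U \<Longrightarrow> h A = h' A" and C: "C \<subseteq> U" and M: "\<forall>Q\<in>#M. Q \<subseteq> U"
  shows "TC h C M = TC h' C M"
proof -
  have "image_mset (\<lambda>Q. h (Q \<union> C) - h C) M = image_mset (\<lambda>Q. h' (Q \<union> C) - h' C) M"
    using h C M by (intro image_mset_cong) auto
  moreover have "\<Union>(set_mset M) \<union> C \<subseteq> U" using C M by auto
  then have "h (\<Union>(set_mset M) \<union> C) = h' (\<Union>(set_mset M) \<union> C)" by (rule h)
  moreover have "h C = h' C" using h C by auto
  ultimately show ?thesis unfolding TC_def by simp
qed

lemma TC_hP_restrict:
  assumes "cmi_on n K"
  shows "TC (\<lambda>A. hP P (A \<inter> {1..n})) (fst K) (snd K) = TC (hP P) (fst K) (snd K)"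
  using assms unfolding cmi_on_def by (intro TC_cong_sub[where U="{1..n}"]) (auto simp: Int_absorb2)

theorem mainTheorem3:
  fixes n :: nat and K K' :: cmi
  assumes "cmi_on n K" and "cmi_on n K'"
  shows "cmi_implies n K K' \<longleftrightarrow> sub_cmi n K' K"
proof
  assume imp: "cmi_implies n K K'"
  show "sub_cmi n K' K"
  proof (rule ccontr)
    assume nsub: "\<not> sub_cmi n K' K"
    have ndeg: "\<not> degenerate n K'" using nsub unfolding sub_cmi_def by blast
    have nii: "\<not> (canpur (Rcond K K') = None \<and> fst K \<subseteq> fst K')" using nsub unfolding sub_cmi_def by blast
    have niii: "\<not> (\<exists>K3. Rcond K K' = Some K3 \<and> canpur (Some K3) \<noteq> None \<and> cmiI K3 = {}
        \<and> \<Union>(set_mset (cmiP K3)) \<subseteq> \<Union>(set_mset (cmiP K))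
        \<and> fst K \<subseteq> fst K3
        \<and> fst K3 \<subseteq> (fst K \<union> \<Union>(set_mset (cmiP K))) - \<Union>(set_mset (cmiP K3))
        \<and> (\<forall>A B m1 m2. A \<in># cmiP K3 \<and> B \<in># cmiP K3 - {#A#} \<and> m1 \<in> A \<and> m2 \<in> B \<longrightarrow>
             (\<exists>X Y. X \<in># cmiP K \<and> Y \<in># cmiP K - {#X#} \<and> m1 \<in> X \<and> m2 \<in> Y)))"
      using nsub unfolding sub_cmi_def by blast
    have s2: "2 \<le> size (snd (pur K'))" by (rule nondeg_size[OF ndeg])
    have "\<exists>P. admissible n P \<and> valid P K \<and> \<not> valid P K'"
    proof (cases "fst K \<subseteq> fst K'")
      case False
      then show ?thesis using case_notCC[OF assms s2 False] admissible_PB by blast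
    next
      case CC': True
      have cp: "canpur (Rcond K K') \<noteq> None"
      proof
        assume "canpur (Rcond K K') = None"
        then show False using nii CC' by simp
      qed
      show ?thesis
      proof (cases "cmiI K' - cmiI K = {}")
        case False
        then show ?thesis using case_D[OF False] admissible_PB by blast
      next
        case D: True
        have II': "cmiI K' \<subseteq> cmiI K" using D by auto
        define T where "T = Pparts (cmiI K) (cmiP K')"
        define C2 where "C2 = fst K' - cmiI K"
        have sT: "2 \<le> size T"
        proof (rule ccontr)
          assume "\<not> 2 \<le> size T"
          then have "Rcond K K' = None" using Rcond_D_empty[OF D] unfolding T_def by simp
          then show False using cp by (simp add: canpur_def)
        qed
        have R: "Rcond K K' = Some (C2, T)"
          using Rcond_D_empty[OF D] sT unfolding T_def C2_def by simp
        have cp3: "canpur (Some (C2, T)) \<noteq> None"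
          using sT unfolding canpur_Some_None_iff C2_def T_def T_pur by simp
        have I3: "cmiI (C2, T) = {}"
        proof -
          have "cmiI (C2, T) = repI T" unfolding cmiI_def C2_def T_def T_pur ..
          also have "\<dots> = repI (filter_mset (\<lambda>A. A \<noteq> {}) (image_mset (\<lambda>Q. Q - cmiI K) (snd (pur K'))))"
            unfolding T_def T_eq[OF II'] ..
          also have "\<dots> = {}"
            using II' unfolding cmiI_def by (intro repI_filter_image_empty) simp
          finally show ?thesis .
        qed
        have P3: "cmiP (C2, T) = T" using cmiP_K3[of K' "cmiI K"] I3 unfolding C2_def T_def by simp
        have CC2: "fst K \<subseteq> C2" using CC' cmiI_disj[of K] unfolding C2_def by auto
        have C2T: "C2 \<inter> \<Union>(set_mset T) = {}" using T_mem[of _ K K'] unfolding C2_def T_def by blast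
        have nconj: "\<not> (\<Union>(set_mset T) \<subseteq> \<Union>(set_mset (cmiP K))
            \<and> C2 \<subseteq> (fst K \<union> \<Union>(set_mset (cmiP K))) - \<Union>(set_mset T)
            \<and> (\<forall>A B m1 m2. A \<in># T \<and> B \<in># T - {#A#} \<and> m1 \<in> A \<and> m2 \<in> B \<longrightarrow>
             (\<exists>X Y. X \<in># cmiP K \<and> Y \<in># cmiP K - {#X#} \<and> m1 \<in> X \<and> m2 \<in> Y)))"
          using niii R cp3 I3 P3 CC2 by auto
        show ?thesis
        proof (cases "\<Union>(set_mset T) \<subseteq> \<Union>(set_mset (cmiP K))")
          case False
          then obtain t m where t: "t \<in># T" "m \<in> t" "m \<notin> \<Union>(set_mset (cmiP K))" by blast
          show ?thesis using case_b1[OF II' sT[unfolded T_def] t[unfolded T_def]] admissible_PB by blast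
        next
          case sub1: True
          show ?thesis
          proof (cases "\<forall>A B m1 m2. A \<in># T \<and> B \<in># T - {#A#} \<and> m1 \<in> A \<and> m2 \<in> B \<longrightarrow>
             (\<exists>X Y. X \<in># cmiP K \<and> Y \<in># cmiP K - {#X#} \<and> m1 \<in> X \<and> m2 \<in> Y)")
            case False
            then obtain A B m1 m2 where ab: "A \<in># T" "B \<in># T - {#A#}" "m1 \<in> A" "m2 \<in> B"
              and nsep: "\<not> (\<exists>X Y. X \<in># cmiP K \<and> Y \<in># cmiP K - {#X#} \<and> m1 \<in> X \<and> m2 \<in> Y)"
              by blast
            show ?thesis using case_b4[OF II' ab(1,2)[unfolded T_def] ab(3,4) nsep] admissible_PB by blast
          next
            case sep: True
            then have "\<not> C2 \<subseteq> (fst K \<union> \<Union>(set_mset (cmiP K))) - \<Union>(set_mset T)"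
              using nconj sub1 by blast
            then obtain c where c: "c \<in> C2" "c \<notin> fst K" "c \<notin> \<Union>(set_mset (cmiP K))"
              using C2T by blast
            obtain t1 t2 where tt: "t1 \<in># T" "t2 \<in># T - {#t1#}" using size2_obtain[OF sT] by blast
            have t2T: "t2 \<in># T" using tt(2) by (meson in_diffD)
            obtain m1 where m1: "m1 \<in> t1" using T_mem_ne tt(1) unfolding T_def by blast
            obtain m2 where m2: "m2 \<in> t2" using T_mem_ne t2T unfolding T_def by blast
            obtain X Y where XY: "X \<in># cmiP K" "Y \<in># cmiP K - {#X#}" "m1 \<in> X" "m2 \<in> Y"
              using sep tt m1 m2 by blast
            have c1: "c \<in> fst K' - cmiI K" using c(1) unfolding C2_def .
            show ?thesis
              by (rule case_b3[OF II' tt[unfolded T_def] m1 m2 XY c1 c(2) c(3)])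
          qed
        qed
      qed
    qed
    then show False using imp unfolding cmi_implies_def by blast
  qed
next
  assume sub: "sub_cmi n K' K"
  show "cmi_implies n K K'"
    unfolding cmi_implies_def
  proof (intro allI impI)
    fix P assume adm: "admissible n P" and vK: "valid P K"
    show "valid P K'"
    proof (cases "degenerate n K'")
      case True then show ?thesis using adm unfolding degenerate_def by blast
    next
      case False
      define h where "h = (\<lambda>A. hP P (A \<inter> {1..n}))"
      have hpm: "polymat h" unfolding h_def by (rule polymat_hP[OF adm])
      have TK: "TC h (fst K) (snd K) = 0"
        using vK TC_hP_restrict[OF assms(1), of P] unfolding h_def valid_TC by simp
      have rest: "(canpur (Rcond K K') = None \<and> fst K \<subseteq> fst K')
       \<or> (\<exists>K3. Rcond K K' = Some K3 \<and> canpur (Some K3) \<noteq> None \<and> cmiI K3 = {}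
        \<and> \<Union>(set_mset (cmiP K3)) \<subseteq> \<Union>(set_mset (cmiP K))
        \<and> fst K \<subseteq> fst K3
        \<and> fst K3 \<subseteq> (fst K \<union> \<Union>(set_mset (cmiP K))) - \<Union>(set_mset (cmiP K3))
        \<and> (\<forall>A B m1 m2. A \<in># cmiP K3 \<and> B \<in># cmiP K3 - {#A#} \<and> m1 \<in> A \<and> m2 \<in> B \<longrightarrow>
             (\<exists>X Y. X \<in># cmiP K \<and> Y \<in># cmiP K - {#X#} \<and> m1 \<in> X \<and> m2 \<in> Y)))"
        using sub False unfolding sub_cmi_def by blast
      have "TC h (fst K') (snd K') = 0" by (rule if_dir[OF hpm assms(1) TK rest])
      then show ?thesis
        using TC_hP_restrict[OF assms(2), of P] unfolding h_def valid_TC by simp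
    qed
  qed
qed


end
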